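(* Let $(X,\mathbf R)$ be a symmetric association scheme with $D$ classes, cometric with respect to $E_0,\dots,E_D$. Fix $x\in X$, let $T=T(x)$, let $\chi\in V$ be a code and set $\delta^*=\delta^*(\chi)$. Suppose $t\in\{1,\dots,D\}$ is such that $$|\{i\in W_s: E_i^*(x)\chi\ne0\}|\le \delta^*-r^*(W)$$ for every irreducible $T$-module $W\subseteq V$ with $1\le r^*(W)\le t$. If every irreducible $T$-module in $V$ with dual endpoint at most $t$ is dual thin, then $F\chi$ is a relative $t$-design with respect to $x$ for every $F\in T$.
   Context: $(X,\mathbf R)$ is a symmetric association scheme with associate matrices $A_0=I,\dots,A_D$, Bose–Mesner algebra $M$, primitive idempotents $E_0=|X|^{-1}J,\dots,E_D$; cometric means each $E_j$ is a polynomial of degree exactly $j$ in $E_1$ under entrywise multiplication. $V=\mathbb C^X$ with standard basis $\{\hat y\}$ and standard Hermitian inner product. $E_i^*(x)$ is diagonal with $(E_i^*(x))_{yy}=(A_i)_{xy}$; $A_i^*(x)$ is diagonal with $(A_i^*(x))_{yy}=|X|(E_i)_{xy}$; $T(x)$ is generated by $M$ and the $A_i^*(x)$. For an irreducible $T(x)$-module $W$: support $W_s=\{i:E_i^*(x)W\ne0\}$, dual endpoint $r^*(W)=\min\{j:E_jW\neq0\}$, dual thin means $\dim E_jW\le1$ for all $j$. A code is a vector $\chi\notin E_0V$ with $\chi\notin E_0^*(z)V$ for all $z$. $\delta^*(\chi)=\min\{j\ne0:E_j\chi\ne0\}$. $\psi$ is a relative $t$-design with respect to $x$ if $E_j\psi$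 and $E_j\hat x$ are linearly dependent for all $1\le j\le t$. *)

theory Defs
  imports "HOL-Computational_Algebra.Polynomial"
begin

type_synonym 'x mat = "'x \<Rightarrow> 'x \<Rightarrow> complex"
type_synonym 'x vec = "'x \<Rightarrow> complex"

definition mmult :: "('x::finite) mat \<Rightarrow> 'x mat \<Rightarrow> 'x mat" where
  "mmult A B = (\<lambda>y z. \<Sum>w\<in>UNIV. A y w * B w z)"

definition mvec :: "('x::finite) mat \<Rightarrow> 'x vec \<Rightarrow> 'x vec" where
  "mvec A v = (\<lambda>y. \<Sum>z\<in>UNIV. A y z * v z)"

definition zero_mat :: "'x mat" where "zero_mat = (\<lambda>y z. 0)"
definition zero_vec :: "'x vec" where "zero_vec = (\<lambda>y. 0)"

definition std_vec :: "'x \<Rightarrow> 'x vec" where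
  "std_vec y = (\<lambda>z. if z = y then 1 else 0)"

text \<open>The scheme is given by the class function \<open>cls\<close>: \<open>(y,z) \<in> R_i \<longleftrightarrow> cls y z = i\<close>,
  with classes \<open>R_0,\<dots>,R_D\<close>.\<close>

definition sym_assoc_scheme :: "nat \<Rightarrow> ('x::finite \<Rightarrow> 'x \<Rightarrow> nat) \<Rightarrow> bool" where
  "sym_assoc_scheme D cls \<longleftrightarrow>
     (\<forall>y z. cls y z \<le> D) \<and>
     (\<forall>y z. cls y z = 0 \<longleftrightarrow> y = z) \<and>
     (\<forall>y z. cls y z = cls z y) \<and>
     (\<forall>i\<le>D. \<exists>y z. cls y z = i) \<and>
     (\<forall>i j k. \<exists>p. \<forall>y z. cls y z = k \<longrightarrow> card {w. cls y w = i \<and> cls w z = j} = p)"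

definition assoc_mat :: "('x \<Rightarrow> 'x \<Rightarrow> nat) \<Rightarrow> nat \<Rightarrow> 'x mat" where
  "assoc_mat cls i = (\<lambda>y z. if cls y z = i then 1 else 0)"

definition bose_mesner :: "nat \<Rightarrow> ('x \<Rightarrow> 'x \<Rightarrow> nat) \<Rightarrow> 'x mat set" where
  "bose_mesner D cls = {M. \<exists>c. M = (\<lambda>y z. \<Sum>i\<le>D. c i * assoc_mat cls i y z)}"

text \<open>\<open>E_0,\<dots>,E_D\<close> are the primitive idempotents of the Bose--Mesner algebra (which has
  dimension \<open>D+1\<close>): \<open>D+1\<close> nonzero mutually orthogonal idempotents in it, with \<open>E_0 = |X|^{-1} J\<close>.\<close>
definition primitive_idempotents ::
    "nat \<Rightarrow> ('x::finite \<Rightarrow> 'x \<Rightarrow> nat) \<Rightarrow> (nat \<Rightarrow> 'x mat) \<Rightarrow> bool" where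
  "primitive_idempotents D cls E \<longleftrightarrow>
     (\<forall>i\<le>D. E i \<in> bose_mesner D cls \<and> E i \<noteq> zero_mat) \<and>
     (\<forall>i\<le>D. \<forall>j\<le>D. mmult (E i) (E j) = (if i = j then E i else zero_mat)) \<and>
     E 0 = (\<lambda>y z. 1 / of_nat (card (UNIV :: 'x set)))"

text \<open>cometric: \<open>E_j\<close> is a polynomial of degree exactly \<open>j\<close> in \<open>E_1\<close> under entrywise
  (Hadamard) multiplication; the Hadamard power \<open>E_1^{\<circ>k}\<close> has entries \<open>(E_1)_{yz}^k\<close>.\<close>
definition cometric :: "nat \<Rightarrow> (nat \<Rightarrow> 'x mat) \<Rightarrow> bool" where
  "cometric D E \<longleftrightarrow>
     (\<forall>j\<le>D. \<exists>p :: complex poly. degree p = j \<and> E j = (\<lambda>y z. poly p (E 1 y z)))"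

definition dual_idem :: "('x \<Rightarrow> 'x \<Rightarrow> nat) \<Rightarrow> nat \<Rightarrow> 'x \<Rightarrow> 'x mat" where
  "dual_idem cls i x = (\<lambda>y z. if y = z then assoc_mat cls i x y else 0)"

definition dual_adj :: "(nat \<Rightarrow> 'x mat) \<Rightarrow> nat \<Rightarrow> 'x \<Rightarrow> 'x mat" where
  "dual_adj E i x = (\<lambda>y z. if y = z then of_nat (card (UNIV :: 'x set)) * E i x y else 0)"

inductive_set terw_alg ::
    "nat \<Rightarrow> ('x::finite \<Rightarrow> 'x \<Rightarrow> nat) \<Rightarrow> (nat \<Rightarrow> 'x mat) \<Rightarrow> 'x \<Rightarrow> 'x mat set"
  for D cls E x where
  gen_A: "i \<le> D \<Longrightarrow> assoc_mat cls i \<in> terw_alg D cls E x"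
| gen_Astar: "i \<le> D \<Longrightarrow> dual_adj E i x \<in> terw_alg D cls E x"
| add: "A \<in> terw_alg D cls E x \<Longrightarrow> B \<in> terw_alg D cls E x
          \<Longrightarrow> (\<lambda>y z. A y z + B y z) \<in> terw_alg D cls E x"
| smult: "A \<in> terw_alg D cls E x \<Longrightarrow> (\<lambda>y z. c * A y z) \<in> terw_alg D cls E x"
| mult: "A \<in> terw_alg D cls E x \<Longrightarrow> B \<in> terw_alg D cls E x
          \<Longrightarrow> mmult A B \<in> terw_alg D cls E x"

definition csubspace :: "'x vec set \<Rightarrow> bool" where
  "csubspace W \<longleftrightarrow> zero_vec \<in> W \<and> (\<forall>u\<in>W. \<forall>v\<in>W. (\<lambda>y. u y + v y) \<in> W)
                   \<and> (\<forall>c. \<forall>u\<in>W. (\<lambda>y. c * u y) \<in> W)"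

definition is_module :: "('x::finite) mat set \<Rightarrow> 'x vec set \<Rightarrow> bool" where
  "is_module T W \<longleftrightarrow> csubspace W \<and> (\<forall>F\<in>T. \<forall>w\<in>W. mvec F w \<in> W)"

definition irreducible_module :: "('x::finite) mat set \<Rightarrow> 'x vec set \<Rightarrow> bool" where
  "irreducible_module T W \<longleftrightarrow> is_module T W \<and> W \<noteq> {zero_vec} \<and>
     (\<forall>U. is_module T U \<and> U \<subseteq> W \<longrightarrow> U = {zero_vec} \<or> U = W)"

definition module_support :: "nat \<Rightarrow> ('x::finite \<Rightarrow> 'x \<Rightarrow> nat) \<Rightarrow> 'x \<Rightarrow> 'x vec set \<Rightarrow> nat set" where
  "module_support D cls x W = {i. i \<le> D \<and> (\<exists>w\<in>W. mvec (dual_idem cls i x) w \<noteq> zero_vec)}"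

definition dual_endpoint :: "nat \<Rightarrow> (nat \<Rightarrow> ('x::finite) mat) \<Rightarrow> 'x vec set \<Rightarrow> nat" where
  "dual_endpoint D E W = (LEAST j. j \<le> D \<and> (\<exists>w\<in>W. mvec (E j) w \<noteq> zero_vec))"

text \<open>dual thin: \<open>dim (E_j W) \<le> 1\<close> for all \<open>j\<close>, i.e. \<open>E_j W\<close> lies in the span of one vector\<close>
definition dual_thin :: "nat \<Rightarrow> (nat \<Rightarrow> ('x::finite) mat) \<Rightarrow> 'x vec set \<Rightarrow> bool" where
  "dual_thin D E W \<longleftrightarrow> (\<forall>j\<le>D. \<exists>u. \<forall>w\<in>W. \<exists>c. mvec (E j) w = (\<lambda>y. c * u y))"

definition is_code :: "('x::finite \<Rightarrow> 'x \<Rightarrow> nat) \<Rightarrow> (nat \<Rightarrow> 'x mat) \<Rightarrow> 'x vec \<Rightarrow> bool" where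
  "is_code cls E \<chi> \<longleftrightarrow> \<chi> \<notin> range (mvec (E 0)) \<and> (\<forall>z. \<chi> \<notin> range (mvec (dual_idem cls 0 z)))"

definition dual_degree :: "nat \<Rightarrow> (nat \<Rightarrow> ('x::finite) mat) \<Rightarrow> 'x vec \<Rightarrow> nat" where
  "dual_degree D E \<chi> = (LEAST j. j \<noteq> 0 \<and> j \<le> D \<and> mvec (E j) \<chi> \<noteq> zero_vec)"

definition relative_design :: "(nat \<Rightarrow> ('x::finite) mat) \<Rightarrow> 'x vec \<Rightarrow> 'x \<Rightarrow> nat \<Rightarrow> bool" where
  "relative_design E \<psi> x t \<longleftrightarrow>
     (\<forall>j. 1 \<le> j \<and> j \<le> t \<longrightarrow>
        (\<exists>a b. (a \<noteq> 0 \<or> b \<noteq> 0) \<and>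
           (\<lambda>y. a * mvec (E j) \<psi> y + b * mvec (E j) (std_vec x) y) = zero_vec))"

end

theory Submission
  imports Defs "HOL-Library.Function_Algebras"
begin

lemma sum_fun_app: "(sum f S) y = (\<Sum>v\<in>S. f v y)"
  by (induction S rule: infinite_finite_induct) auto

lemma sum_fun_app2: "(sum f S) y z = (\<Sum>v\<in>S. f v y z)"
  by (simp add: sum_fun_app)

definition msc :: "complex \<Rightarrow> 'x mat \<Rightarrow> 'x mat" where
  "msc c A = (\<lambda>y z. c * A y z)"

lemma mat_vs: "vector_space msc"
  by unfold_locales (auto simp: msc_def fun_eq_iff algebra_simps)

lemma mmult_assoc: "mmult (mmult A B) C = mmult A (mmult B (C::('x::finite) mat))"
  unfolding mmult_def
  by (auto simp: fun_eq_iff sum_distrib_left sum_distrib_right mult.assoc intro: sum.swap)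

lemma mvec_mmult: "mvec (mmult A B) v = mvec A (mvec B (v::('x::finite) vec))"
  unfolding mmult_def mvec_def
  by (auto simp: fun_eq_iff sum_distrib_left sum_distrib_right mult.assoc intro: sum.swap)

lemma mmult_sum_right: "mmult A (sum f S) = (\<Sum>v\<in>S. mmult A (f v))"
  unfolding mmult_def by (auto simp: fun_eq_iff sum_fun_app sum_distrib_left intro: sum.swap)

lemma mmult_msc_right: "mmult A (msc c B) = msc c (mmult A B)"
  unfolding mmult_def msc_def by (auto simp: fun_eq_iff sum_distrib_left algebra_simps)

lemma mmult_msc_left: "mmult (msc c A) B = msc c (mmult A B)"
  unfolding mmult_def msc_def by (auto simp: fun_eq_iff sum_distrib_left algebra_simps)

lemma mmult_sum_left: "mmult (sum f S) A = (\<Sum>v\<in>S. mmult (f v) A)"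
  unfolding mmult_def by (auto simp: fun_eq_iff sum_fun_app sum_distrib_right intro: sum.swap)



interpretation MV: vector_space "msc :: complex \<Rightarrow> ('x::finite) mat \<Rightarrow> 'x mat"
  by (rule mat_vs)

lemma zero_mat_eq: "zero_mat = 0"
  by (simp add: zero_mat_def fun_eq_iff)

lemma zero_vec_eq: "zero_vec = 0"
  by (simp add: zero_vec_def fun_eq_iff)

definition idm :: "'x mat" where "idm = (\<lambda>y z. if y = z then 1 else 0)"

lemma ifmul1[simp]: "(if P then 1 else 0) * (a::complex) = (if P then a else 0)" by simp
lemma ifmul2[simp]: "(a::complex) * (if P then 1 else 0) = (if P then a else 0)" by simp

lemma mmult_idm_left[simp]: "mmult idm (A::('x::finite) mat) = A"
  by (simp add: mmult_def idm_def fun_eq_iff)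

lemma mmult_idm_right[simp]: "mmult (A::('x::finite) mat) idm = A"
  by (simp add: mmult_def idm_def fun_eq_iff)

lemma msc_eq_self: "msc c A = A \<Longrightarrow> A \<noteq> 0 \<Longrightarrow> c = 1"
proof -
  assume h: "msc c A = A" "A \<noteq> 0"
  then obtain y z where "A y z \<noteq> 0" by (auto simp: fun_eq_iff)
  moreover have "c * A y z = A y z" using h(1) by (auto simp: msc_def fun_eq_iff dest: fun_cong)
  ultimately show "c = 1" by simp
qed

lemma msc_eq_zero: "msc c A = 0 \<Longrightarrow> A \<noteq> 0 \<Longrightarrow> c = 0"
proof -
  assume h: "msc c A = 0" "A \<noteq> 0"
  then obtain y z where "A y z \<noteq> 0" by (auto simp: fun_eq_iff)
  moreover have "c * A y z = 0" using h(1) by (auto simp: msc_def fun_eq_iff dest: fun_cong)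
  ultimately show "c = 0" by simp
qed

locale AS =
  fixes D :: nat and cls :: "'x::finite \<Rightarrow> 'x \<Rightarrow> nat" and E :: "nat \<Rightarrow> 'x mat"
  assumes sas: "sym_assoc_scheme D cls"
    and pri: "primitive_idempotents D cls E"
    and com: "cometric D E"
begin

lemma cls_le: "cls y z \<le> D" using sas by (simp add: sym_assoc_scheme_def)
lemma cls0: "cls y z = 0 \<longleftrightarrow> y = z" using sas by (simp add: sym_assoc_scheme_def)
lemma cls_sym: "cls y z = cls z y" using sas by (simp add: sym_assoc_scheme_def)
lemma cls_ex: "i \<le> D \<Longrightarrow> \<exists>y z. cls y z = i" using sas by (simp add: sym_assoc_scheme_def)
lemma cls_int: "\<exists>p. \<forall>y z. cls y z = k \<longrightarrow> card {w. cls y w = i \<and> cls w z = j} = p"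
  using sas unfolding sym_assoc_scheme_def by blast

lemma E_BM: "i \<le> D \<Longrightarrow> E i \<in> bose_mesner D cls" using pri by (simp add: primitive_idempotents_def)
lemma E_nz: "i \<le> D \<Longrightarrow> E i \<noteq> 0" using pri by (simp add: primitive_idempotents_def zero_mat_eq)
lemma E_orth: "i \<le> D \<Longrightarrow> j \<le> D \<Longrightarrow> mmult (E i) (E j) = (if i = j then E i else 0)"
  using pri by (simp add: primitive_idempotents_def zero_mat_eq)
lemma E0: "E 0 = (\<lambda>y z. 1 / of_nat (card (UNIV :: 'x set)))"
  using pri by (simp add: primitive_idempotents_def)

lemma BM_class: "B \<in> bose_mesner D cls \<Longrightarrow> \<exists>f. \<forall>y z. B y z = f (cls y z)"
proof -
  assume "B \<in> bose_mesner D cls"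
  then obtain c where c: "B = (\<lambda>y z. \<Sum>i\<le>D. c i * assoc_mat cls i y z)"
    by (auto simp: bose_mesner_def)
  have "B y z = c (cls y z)" for y z
    using cls_le[of y z] by (simp add: c assoc_mat_def if_distrib cong: if_cong)
  then show ?thesis by blast
qed

lemma BM_sym: "B \<in> bose_mesner D cls \<Longrightarrow> B y z = B z y"
  using BM_class cls_sym by metis

lemma E_sym: "i \<le> D \<Longrightarrow> E i y z = E i z y"
  using BM_sym E_BM by blast

lemma E_cls: "i \<le> D \<Longrightarrow> cls y z = cls y' z' \<Longrightarrow> E i y z = E i y' z'"
  using BM_class[OF E_BM] by metis

lemma assoc_BM: "i \<le> D \<Longrightarrow> assoc_mat cls i \<in> bose_mesner D cls"
  unfolding bose_mesner_def
  by (rule CollectI, rule exI[of _ "\<lambda>j. if j = i then 1 else 0"])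
     (auto simp: fun_eq_iff)

lemma BM_in_spanA: "B \<in> bose_mesner D cls \<Longrightarrow> B \<in> MV.span (assoc_mat cls ` {..D})"
proof -
  assume "B \<in> bose_mesner D cls"
  then obtain c where c: "B = (\<lambda>y z. \<Sum>i\<le>D. c i * assoc_mat cls i y z)"
    by (auto simp: bose_mesner_def)
  have "B = (\<Sum>i\<le>D. msc (c i) (assoc_mat cls i))"
    by (simp add: c fun_eq_iff sum_fun_app2 msc_def)
  also have "\<dots> \<in> MV.span (assoc_mat cls ` {..D})"
    by (intro MV.span_sum MV.span_scale MV.span_base) auto
  finally show ?thesis .
qed

lemma E_inj: "inj_on E {..D}"
proof (rule inj_onI)
  fix i j assume ij: "i \<in> {..D}" "j \<in> {..D}" "E i = E j"
  show "i = j"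
  proof (rule ccontr)
    assume "i \<noteq> j"
    then have "mmult (E i) (E j) = 0" using ij(1,2) E_orth[of i j] by simp
    moreover have "mmult (E i) (E j) = E i" using ij E_orth[of i i] by simp
    ultimately have "E i = 0" by simp
    with E_nz ij show False by auto
  qed
qed

lemma E_indep: "MV.independent (E ` {..D})"
proof -
  have "\<not> (\<exists>v\<in>E ` {..D}. u v \<noteq> 0)" if h: "(\<Sum>v\<in>E ` {..D}. msc (u v) v) = 0" for u
  proof -
    have h2: "(\<Sum>k\<le>D. msc (u (E k)) (E k)) = 0"
      using h by (simp add: sum.reindex[OF E_inj])
    have "u (E j) = 0" if j: "j \<le> D" for j
    proof -
      have "mmult (E j) (\<Sum>k\<le>D. msc (u (E k)) (E k)) = (\<Sum>k\<le>D. msc (u (E k)) (mmult (E j) (E k)))"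
        by (simp add: mmult_sum_right mmult_msc_right)
      also have "\<dots> = (\<Sum>k\<le>D. if k = j then msc (u (E j)) (E j) else 0)"
        by (rule sum.cong) (auto simp: E_orth j msc_def fun_eq_iff)
      also have "\<dots> = msc (u (E j)) (E j)" using j by simp
      finally have "msc (u (E j)) (E j) = 0" using h2 by (simp add: mmult_def fun_eq_iff)
      then show ?thesis using msc_eq_zero E_nz j by blast
    qed
    then show ?thesis by auto
  qed
  then show ?thesis by (subst MV.dependent_finite) auto
qed

lemma A_in_spanE: "i \<le> D \<Longrightarrow> assoc_mat cls i \<in> MV.span (E ` {..D})"
proof (rule ccontr)
  assume i: "i \<le> D" and n: "assoc_mat cls i \<notin> MV.span (E ` {..D})"
  have ind: "MV.independent (insert (assoc_mat cls i) (E ` {..D}))"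
    using MV.independent_insertI[OF n E_indep] .
  have sub: "insert (assoc_mat cls i) (E ` {..D}) \<subseteq> MV.span (assoc_mat cls ` {..D})"
    using i E_BM BM_in_spanA by (auto intro: MV.span_base)
  have "card (insert (assoc_mat cls i) (E ` {..D})) \<le> card (assoc_mat cls ` {..D})"
    using MV.independent_span_bound[OF _ ind sub] by auto
  also have "\<dots> \<le> Suc D" using card_image_le[of "{..D}" "assoc_mat cls"] by simp
  finally have c1: "card (insert (assoc_mat cls i) (E ` {..D})) \<le> Suc D" .
  have "assoc_mat cls i \<notin> E ` {..D}"
  proof
    assume "assoc_mat cls i \<in> E ` {..D}"
    then have "assoc_mat cls i \<in> MV.span (E ` {..D})" by (rule MV.span_base)
    with n show False by simp
  qed
  then have "card (insert (assoc_mat cls i) (E ` {..D})) = Suc (card (E ` {..D}))"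
    by (intro card_insert_disjoint) auto
  also have "card (E ` {..D}) = Suc D" by (simp add: card_image[OF E_inj])
  finally have "card (insert (assoc_mat cls i) (E ` {..D})) = Suc (Suc D)" .
  with c1 show False by simp
qed

lemma BM_coef: "B \<in> bose_mesner D cls \<Longrightarrow> \<exists>c. B = (\<Sum>k\<le>D. msc (c k) (E k))"
proof -
  assume "B \<in> bose_mesner D cls"
  then obtain c where c: "B = (\<lambda>y z. \<Sum>i\<le>D. c i * assoc_mat cls i y z)"
    by (auto simp: bose_mesner_def)
  have "B = (\<Sum>i\<le>D. msc (c i) (assoc_mat cls i))"
    by (simp add: c fun_eq_iff sum_fun_app2 msc_def)
  also have "\<dots> \<in> MV.span (E ` {..D})"
    by (intro MV.span_sum MV.span_scale) (auto intro: A_in_spanE)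
  finally have "B \<in> range (\<lambda>u. \<Sum>v\<in>E ` {..D}. msc (u v) v)"
    using MV.span_finite[of "E ` {..D}"] by auto
  then obtain u where "B = (\<Sum>v\<in>E ` {..D}. msc (u v) v)" by auto
  then have "B = (\<Sum>k\<le>D. msc (u (E k)) (E k))"
    by (simp add: sum.reindex[OF E_inj])
  then show ?thesis by (rule exI[of _ "\<lambda>k. u (E k)"])
qed

lemma comb_mult_E:
  assumes j: "j \<le> D"
  shows "mmult (\<Sum>k\<le>D. msc (c k) (E k)) (E j) = msc (c j) (E j)"
    and "mmult (E j) (\<Sum>k\<le>D. msc (c k) (E k)) = msc (c j) (E j)"
proof -
  have "mmult (\<Sum>k\<le>D. msc (c k) (E k)) (E j) = (\<Sum>k\<le>D. msc (c k) (mmult (E k) (E j)))"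
    by (simp add: mmult_sum_left mmult_msc_left)
  also have "\<dots> = (\<Sum>k\<le>D. if k = j then msc (c j) (E j) else 0)"
    by (rule sum.cong) (auto simp: E_orth j msc_def fun_eq_iff)
  also have "\<dots> = msc (c j) (E j)" using j by simp
  finally show "mmult (\<Sum>k\<le>D. msc (c k) (E k)) (E j) = msc (c j) (E j)" .
  have "mmult (E j) (\<Sum>k\<le>D. msc (c k) (E k)) = (\<Sum>k\<le>D. msc (c k) (mmult (E j) (E k)))"
    by (simp add: mmult_sum_right mmult_msc_right)
  also have "\<dots> = (\<Sum>k\<le>D. if k = j then msc (c j) (E j) else 0)"
    by (rule sum.cong) (auto simp: E_orth j msc_def fun_eq_iff)
  also have "\<dots> = msc (c j) (E j)" using j by simp
  finally show "mmult (E j) (\<Sum>k\<le>D. msc (c k) (E k)) = msc (c j) (E j)" .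
qed

lemma BM_mult_E:
  assumes "B \<in> bose_mesner D cls" "j \<le> D"
  shows "\<exists>g. mmult B (E j) = msc g (E j) \<and> mmult (E j) B = msc g (E j)"
  using BM_coef[OF assms(1)] comb_mult_E[OF assms(2)] by metis

lemma idm_eq: "assoc_mat cls 0 = idm"
  by (simp add: assoc_mat_def idm_def cls0 fun_eq_iff)

lemma E_sum: "(\<Sum>k\<le>D. E k) = idm"
proof -
  obtain c where c: "idm = (\<Sum>k\<le>D. msc (c k) (E k))"
    using BM_coef[OF assoc_BM[of 0]] idm_eq by auto
  have "c j = 1" if j: "j \<le> D" for j
  proof -
    have "msc (c j) (E j) = E j" using comb_mult_E(1)[OF j, of c] c[symmetric] by simp
    then show ?thesis using msc_eq_self E_nz j by blast
  qed
  then have "(\<Sum>k\<le>D. msc (c k) (E k)) = (\<Sum>k\<le>D. msc 1 (E k))"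
    by (intro sum.cong) auto
  then have "idm = (\<Sum>k\<le>D. msc 1 (E k))" using c by simp
  moreover have "(\<lambda>k. msc 1 (E k)) = E" by (simp add: msc_def fun_eq_iff)
  ultimately show ?thesis by simp
qed

lemma E_sum_entry: "(\<Sum>k\<le>D. E k y z) = (if y = z then 1 else 0)"
proof -
  have "(\<Sum>k\<le>D. E k y z) = (\<Sum>k\<le>D. E k) y z" by (simp add: sum_fun_app2)
  also have "\<dots> = (if y = z then 1 else 0)" by (simp add: E_sum idm_def)
  finally show ?thesis .
qed

lemma E_sum_vec: "(\<Sum>k\<le>D. mvec (E k) u y) = u y"
proof -
  have "(\<Sum>k\<le>D. mvec (E k) u y) = (\<Sum>z\<in>UNIV. (\<Sum>k\<le>D. E k y z) * u z)"
    unfolding mvec_def sum_distrib_right by (rule sum.swap)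
  also have "\<dots> = u y" by (simp add: E_sum_entry)
  finally show ?thesis .
qed

end


lemma swap3: "(\<Sum>a\<in>(UNIV::'a::finite set). \<Sum>b\<in>(UNIV::'b::finite set). \<Sum>c\<in>(UNIV::'c::finite set). F a b c)
   = (\<Sum>b\<in>UNIV. \<Sum>c\<in>UNIV. \<Sum>a\<in>UNIV. (F a b c :: complex))"
proof -
  have "(\<Sum>a\<in>(UNIV::'a set). \<Sum>b\<in>(UNIV::'b set). \<Sum>c\<in>(UNIV::'c set). F a b c)
      = (\<Sum>b\<in>UNIV. \<Sum>a\<in>UNIV. \<Sum>c\<in>UNIV. F a b c)" by (rule sum.swap)
  also have "\<dots> = (\<Sum>b\<in>UNIV. \<Sum>c\<in>UNIV. \<Sum>a\<in>UNIV. F a b c)"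
    by (rule sum.cong[OF refl], rule sum.swap)
  finally show ?thesis .
qed

lemma msc_cancel: "msc a A = msc b A \<Longrightarrow> A \<noteq> 0 \<Longrightarrow> a = b"
proof -
  assume h: "msc a A = msc b A" "A \<noteq> 0"
  then obtain y z where "A y z \<noteq> 0" by (auto simp: fun_eq_iff)
  moreover have "a * A y z = b * A y z" using h(1) by (auto simp: msc_def fun_eq_iff dest: fun_cong)
  ultimately show "a = b" by simp
qed

context AS
begin

definition Ec :: "nat \<Rightarrow> 'x mat" where "Ec i = (\<lambda>y z. cnj (E i y z))"

lemma Ec_BM: "i \<le> D \<Longrightarrow> Ec i \<in> bose_mesner D cls"
proof -
  assume "i \<le> D"
  then obtain c where c: "E i = (\<lambda>y z. \<Sum>l\<le>D. c l * assoc_mat cls l y z)"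
    using E_BM by (auto simp: bose_mesner_def)
  have "Ec i = (\<lambda>y z. \<Sum>l\<le>D. cnj (c l) * assoc_mat cls l y z)"
    by (simp add: Ec_def c fun_eq_iff assoc_mat_def)
  then show ?thesis by (auto simp: bose_mesner_def)
qed

lemma Ec_mult: "i \<le> D \<Longrightarrow> j \<le> D \<Longrightarrow> mmult (Ec i) (Ec j) = (if i = j then Ec i else 0)"
proof -
  assume ij: "i \<le> D" "j \<le> D"
  have "mmult (Ec i) (Ec j) = (\<lambda>y z. cnj (mmult (E i) (E j) y z))"
    by (simp add: Ec_def mmult_def fun_eq_iff)
  then show ?thesis using E_orth[OF ij] by (auto simp: Ec_def fun_eq_iff)
qed

lemma Ec_E_same: "i \<le> D \<Longrightarrow> mmult (Ec i) (E i) = E i"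
proof -
  assume i: "i \<le> D"
  obtain g where g: "mmult (Ec i) (E i) = msc g (E i)"
    using BM_mult_E[OF Ec_BM[OF i] i] by auto
  obtain y0 z0 where yz: "E i y0 z0 \<noteq> 0" using E_nz[OF i] by (auto simp: fun_eq_iff)
  have "(\<Sum>y\<in>UNIV. mmult (Ec i) (E i) y y) = (\<Sum>y\<in>UNIV. \<Sum>w\<in>UNIV. cnj (E i y w) * E i y w)"
    unfolding mmult_def Ec_def by (intro sum.cong refl) (metis E_sym[OF i])
  also have "\<dots> = (\<Sum>y\<in>UNIV. \<Sum>w\<in>UNIV. of_real ((cmod (E i y w))\<^sup>2))"
    by (intro sum.cong refl) (metis complex_norm_square mult.commute of_real_power)
  also have "\<dots> = of_real (\<Sum>y\<in>UNIV. \<Sum>w\<in>UNIV. (cmod (E i y w))\<^sup>2)" by simp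
  finally have tr: "(\<Sum>y\<in>UNIV. mmult (Ec i) (E i) y y) = of_real (\<Sum>y\<in>UNIV. \<Sum>w\<in>UNIV. (cmod (E i y w))\<^sup>2)" .
  have pos: "(\<Sum>y\<in>UNIV. \<Sum>w\<in>UNIV. (cmod (E i y w))\<^sup>2) \<noteq> 0"
  proof
    assume "(\<Sum>y\<in>UNIV. \<Sum>w\<in>UNIV. (cmod (E i y w))\<^sup>2) = 0"
    then have "\<forall>y\<in>UNIV. (\<Sum>w\<in>UNIV. (cmod (E i y w))\<^sup>2) = 0"
      by (subst (asm) sum_nonneg_eq_0_iff) (auto intro: sum_nonneg)
    then have "(\<Sum>w\<in>UNIV. (cmod (E i y0 w))\<^sup>2) = 0" by auto
    then have "(cmod (E i y0 z0))\<^sup>2 = 0" by (subst (asm) sum_nonneg_eq_0_iff) auto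
    with yz show False by simp
  qed
  have "g \<noteq> 0"
  proof
    assume "g = 0"
    then have "mmult (Ec i) (E i) = 0" using g by (simp add: msc_def fun_eq_iff)
    then have z: "(\<Sum>y\<in>UNIV. mmult (Ec i) (E i) y y) = 0" by simp
    have "complex_of_real (\<Sum>y\<in>UNIV. \<Sum>w\<in>UNIV. (cmod (E i y w))\<^sup>2) = 0"
      using tr z by metis
    then have "(\<Sum>y\<in>UNIV. \<Sum>w\<in>UNIV. (cmod (E i y w))\<^sup>2) = 0"
      using of_real_eq_0_iff by blast
    then show False using pos by simp
  qed
  have "mmult (Ec i) (mmult (Ec i) (E i)) = mmult (mmult (Ec i) (Ec i)) (E i)"
    by (simp add: mmult_assoc)
  also have "\<dots> = msc g (E i)" using Ec_mult[OF i i] g by simp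
  finally have e1: "mmult (Ec i) (mmult (Ec i) (E i)) = msc g (E i)" .
  have "mmult (Ec i) (mmult (Ec i) (E i)) = msc g (msc g (E i))"
    using g by (simp add: mmult_msc_right)
  also have "\<dots> = msc (g * g) (E i)" by (simp add: msc_def mult.assoc)
  finally have "msc (g * g) (E i) = msc g (E i)" using e1 by simp
  then have "g * g = g" using msc_cancel E_nz[OF i] by blast
  then have "g = 1" using \<open>g \<noteq> 0\<close> by (metis mult_cancel_right1)
  then show ?thesis using g by (simp add: msc_def)
qed

lemma Ec_E_diff: "i \<le> D \<Longrightarrow> j \<le> D \<Longrightarrow> i \<noteq> j \<Longrightarrow> mmult (Ec i) (E j) = 0"
proof -
  assume ij: "i \<le> D" "j \<le> D" "i \<noteq> j"
  have "mmult (Ec i) (E j) = mmult (Ec i) (mmult (Ec j) (E j))" using Ec_E_same[OF ij(2)] by simp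
  also have "\<dots> = mmult (mmult (Ec i) (Ec j)) (E j)" by (simp add: mmult_assoc)
  also have "\<dots> = 0" using Ec_mult[OF ij(1,2)] ij(3) by (simp add: mmult_def fun_eq_iff)
  finally show ?thesis .
qed

lemma E_real: "i \<le> D \<Longrightarrow> cnj (E i y z) = E i y z"
proof -
  assume i: "i \<le> D"
  have "Ec i = mmult (Ec i) (\<Sum>k\<le>D. E k)" by (simp add: E_sum)
  also have "\<dots> = (\<Sum>k\<le>D. mmult (Ec i) (E k))" by (simp add: mmult_sum_right)
  also have "\<dots> = (\<Sum>k\<le>D. if k = i then E i else 0)"
    by (rule sum.cong) (auto simp: Ec_E_same Ec_E_diff i)
  also have "\<dots> = E i" using i by simp
  finally show ?thesis by (simp add: Ec_def fun_eq_iff)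
qed

end


lemma prod3: "(\<Sum>x\<in>(UNIV::'a::finite set). \<Sum>y\<in>(UNIV::'b::finite set). \<Sum>z\<in>(UNIV::'c::finite set). f x * g y * h z)
   = sum f UNIV * sum g UNIV * (sum h UNIV :: complex)"
  by (simp only: sum_distrib_left[symmetric] sum_distrib_right[symmetric])

lemma swap3g: "(\<Sum>a\<in>A. \<Sum>b\<in>B. \<Sum>c\<in>C. F a b c) = (\<Sum>c\<in>C. \<Sum>a\<in>A. \<Sum>b\<in>B. (F a b c :: complex))"
proof -
  have "(\<Sum>a\<in>A. \<Sum>b\<in>B. \<Sum>c\<in>C. F a b c) = (\<Sum>a\<in>A. \<Sum>c\<in>C. \<Sum>b\<in>B. F a b c)"
    by (rule sum.cong[OF refl], rule sum.swap)
  also have "\<dots> = (\<Sum>c\<in>C. \<Sum>a\<in>A. \<Sum>b\<in>B. F a b c)" by (rule sum.swap)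
  finally show ?thesis .
qed

lemma sum3_zero:
  fixes f :: "'a::finite \<Rightarrow> 'b::finite \<Rightarrow> 'c::finite \<Rightarrow> real"
  assumes "(\<Sum>x\<in>UNIV. \<Sum>y\<in>UNIV. \<Sum>z\<in>UNIV. (f x y z)\<^sup>2) = 0"
  shows "f x y z = 0"
proof -
  have n3: "0 \<le> (\<Sum>z\<in>UNIV. (f x y z)\<^sup>2)" for x y by (rule sum_nonneg) simp
  have n2: "0 \<le> (\<Sum>y\<in>UNIV. \<Sum>z\<in>UNIV. (f x y z)\<^sup>2)" for x by (rule sum_nonneg) (rule n3)
  have "(\<Sum>y\<in>UNIV. \<Sum>z\<in>UNIV. (f x y z)\<^sup>2) = 0"
    using assms sum_nonneg_eq_0_iff[of UNIV "\<lambda>x. \<Sum>y\<in>UNIV. \<Sum>z\<in>UNIV. (f x y z)\<^sup>2"] n2 by simp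
  then have "(\<Sum>z\<in>UNIV. (f x y z)\<^sup>2) = 0"
    using sum_nonneg_eq_0_iff[of UNIV "\<lambda>y. \<Sum>z\<in>UNIV. (f x y z)\<^sup>2"] n3 by simp
  then have "(f x y z)\<^sup>2 = 0"
    using sum_nonneg_eq_0_iff[of UNIV "\<lambda>z. (f x y z)\<^sup>2"] by simp
  then show ?thesis by simp
qed

context AS
begin

definition pp :: "nat \<Rightarrow> complex poly" where
  "pp j = (SOME p. degree p = j \<and> E j = (\<lambda>y z. poly p (E 1 y z)))"

lemma pp: "j \<le> D \<Longrightarrow> degree (pp j) = j \<and> E j = (\<lambda>y z. poly (pp j) (E 1 y z))"
proof -
  assume "j \<le> D"
  then have "\<exists>p. degree p = j \<and> E j = (\<lambda>y z. poly p (E 1 y z))"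
    using com by (simp add: cometric_def)
  then show ?thesis unfolding pp_def by (rule someI_ex)
qed

lemma pp_E: "j \<le> D \<Longrightarrow> E j y z = poly (pp j) (E 1 y z)"
  using pp by metis

lemma pp_nz: assumes j: "j \<le> D" shows "pp j \<noteq> 0"
proof
  assume "pp j = 0"
  moreover have "E j = (\<lambda>y z. poly (pp j) (E 1 y z))" using pp[OF j] by blast
  ultimately have "E j = 0" by (simp add: fun_eq_iff)
  with E_nz[OF j] show False by simp
qed

lemma poly_span: "n \<le> D \<Longrightarrow> degree q \<le> n \<Longrightarrow> \<exists>c. \<forall>z. poly q z = (\<Sum>j\<le>n. c j * poly (pp j) z)"
proof (induction n arbitrary: q)
  case 0
  then have dq: "degree q = 0" by simp
  have q: "q = [:coeff q 0:]" using degree_0_id[OF dq] by (rule sym)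
  have d0: "degree (pp 0) = 0" using pp by simp
  have p0: "pp 0 = [:coeff (pp 0) 0:]" using degree_0_id[OF d0] by (rule sym)
  have a: "coeff (pp 0) 0 \<noteq> 0"
  proof
    assume "coeff (pp 0) 0 = 0"
    with p0 have "pp 0 = 0" by simp
    with pp_nz[of 0] show False by simp
  qed
  show ?case
  proof (rule exI[of _ "\<lambda>j. coeff q 0 / coeff (pp 0) 0"], intro allI)
    fix z
    have "poly q z = coeff q 0" by (subst q) simp
    also have "\<dots> = coeff q 0 / coeff (pp 0) 0 * poly (pp 0) z"
      using a by (subst p0) simp
    finally show "poly q z = (\<Sum>j\<le>0. coeff q 0 / coeff (pp 0) 0 * poly (pp j) z)" by simp
  qed
next
  case (Suc n)
  let ?p = "pp (Suc n)"
  have dp: "degree ?p = Suc n" using pp Suc.prems by simp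
  have lc: "coeff ?p (Suc n) \<noteq> 0" using pp_nz[OF Suc.prems(1)] dp leading_coeff_0_iff by metis
  define a where "a = coeff q (Suc n) / coeff ?p (Suc n)"
  define q' where "q' = q - smult a ?p"
  have "degree q' \<le> n"
  proof (rule degree_le, intro allI impI)
    fix i assume "n < i"
    show "coeff q' i = 0"
    proof (cases "i = Suc n")
      case True
      then show ?thesis using lc by (simp add: q'_def a_def)
    next
      case False
      with \<open>n < i\<close> have "Suc n < i" by simp
      then have "coeff q i = 0" "coeff ?p i = 0"
        using Suc.prems(2) dp by (auto intro: coeff_eq_0)
      then show ?thesis by (simp add: q'_def)
    qed
  qed
  then obtain c where c: "\<forall>z. poly q' z = (\<Sum>j\<le>n. c j * poly (pp j) z)"
    using Suc.IH Suc.prems(1) by fastforce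
  show ?case
  proof (rule exI[of _ "c(Suc n := a)"], intro allI)
    fix z
    have "poly q z = poly q' z + a * poly ?p z" by (simp add: q'_def)
    also have "\<dots> = (\<Sum>j\<le>n. c j * poly (pp j) z) + a * poly ?p z" using c by simp
    also have "(\<Sum>j\<le>n. c j * poly (pp j) z) = (\<Sum>j\<le>n. (c(Suc n := a)) j * poly (pp j) z)"
      by (rule sum.cong) auto
    finally show "poly q z = (\<Sum>j\<le>Suc n. (c(Suc n := a)) j * poly (pp j) z)" by simp
  qed
qed

lemma tr0: "k \<le> D \<Longrightarrow> j \<le> D \<Longrightarrow> k \<noteq> j \<Longrightarrow> (\<Sum>w\<in>UNIV. \<Sum>w'\<in>UNIV. E k w w' * E j w w') = 0"
proof -
  assume kj: "k \<le> D" "j \<le> D" "k \<noteq> j"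
  have "(\<Sum>w\<in>UNIV. \<Sum>w'\<in>UNIV. E k w w' * E j w w') = (\<Sum>w\<in>UNIV. mmult (E k) (E j) w w)"
    unfolding mmult_def by (intro sum.cong refl) (metis E_sym kj(2))
  also have "\<dots> = 0" using E_orth[OF kj(1,2)] kj(3) by simp
  finally show ?thesis .
qed

lemma krein_sum1: "k \<le> D \<Longrightarrow> l + 1 < k \<Longrightarrow> (\<Sum>w\<in>UNIV. \<Sum>w'\<in>UNIV. E k w w' * E l w w' * E 1 w w') = 0"
proof -
  assume kl: "k \<le> D" "l + 1 < k"
  define q where "q = pp l * [:0, 1:]"
  have "degree q \<le> l + 1"
    unfolding q_def using degree_mult_le[of "pp l" "[:0,1:]"] pp[of l] kl by simp
  then obtain c where c: "\<forall>z. poly q z = (\<Sum>j\<le>l+1. c j * poly (pp j) z)"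
    using poly_span[of "l+1" q] kl by auto
  have e: "E l w w' * E 1 w w' = (\<Sum>j\<le>l+1. c j * E j w w')" for w w'
  proof -
    have "E l w w' * E 1 w w' = poly q (E 1 w w')" using pp_E[of l] kl by (simp add: q_def)
    also have "\<dots> = (\<Sum>j\<le>l+1. c j * poly (pp j) (E 1 w w'))" using c by simp
    also have "\<dots> = (\<Sum>j\<le>l+1. c j * E j w w')"
    proof (rule sum.cong[OF refl])
      fix j assume "j \<in> {..l+1}"
      then have "j \<le> D" using kl by auto
      then show "c j * poly (pp j) (E 1 w w') = c j * E j w w'"
        by (simp only: pp_E[of j w w'])
    qed
    finally show ?thesis .
  qed
  have "(\<Sum>w\<in>UNIV. \<Sum>w'\<in>UNIV. E k w w' * E l w w' * E 1 w w')
      = (\<Sum>w\<in>UNIV. \<Sum>w'\<in>UNIV. \<Sum>j\<le>l+1. c j * (E k w w' * E j w w'))"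
  proof (intro sum.cong refl)
    fix w w'
    have "E k w w' * E l w w' * E 1 w w' = E k w w' * (E l w w' * E 1 w w')" by (simp only: mult.assoc)
    also have "\<dots> = E k w w' * (\<Sum>j\<le>l+1. c j * E j w w')" by (simp only: e)
    also have "\<dots> = (\<Sum>j\<le>l+1. c j * (E k w w' * E j w w'))"
      unfolding sum_distrib_left by (rule sum.cong[OF refl]) (rule mult.left_commute)
    finally show "E k w w' * E l w w' * E 1 w w' = (\<Sum>j\<le>l+1. c j * (E k w w' * E j w w'))" .
  qed
  also have "\<dots> = (\<Sum>j\<le>l+1. c j * (\<Sum>w\<in>UNIV. \<Sum>w'\<in>UNIV. E k w w' * E j w w'))"
    by (subst swap3g) (simp only: sum_distrib_left)
  also have "\<dots> = 0"
    by (rule sum.neutral) (use tr0 kl in auto)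
  finally show ?thesis .
qed

lemma krein_sum: "k \<le> D \<Longrightarrow> l \<le> D \<Longrightarrow> l + 1 < k \<or> k + 1 < l
   \<Longrightarrow> (\<Sum>w\<in>UNIV. \<Sum>w'\<in>UNIV. E k w w' * E l w w' * E 1 w w') = 0"
proof -
  assume h: "k \<le> D" "l \<le> D" "l + 1 < k \<or> k + 1 < l"
  show ?thesis
  proof (cases "l + 1 < k")
    case True then show ?thesis using krein_sum1 h by blast
  next
    case False
    then have "k + 1 < l" using h by auto
    then have "(\<Sum>w\<in>UNIV. \<Sum>w'\<in>UNIV. E l w w' * E k w w' * E 1 w w') = 0" using krein_sum1 h by blast
    then show ?thesis by (simp add: mult.commute mult.left_commute)
  qed
qed

lemma Esq: "k \<le> D \<Longrightarrow> (\<Sum>y\<in>UNIV. E k y w * E k y w') = E k w w'"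
proof -
  assume k: "k \<le> D"
  have "(\<Sum>y\<in>UNIV. E k y w * E k y w') = mmult (E k) (E k) w w'"
    unfolding mmult_def by (intro sum.cong refl) (metis E_sym k)
  then show ?thesis using E_orth[OF k k] by simp
qed

lemma krein_mat:
  assumes k: "k \<le> D" and l: "l \<le> D" and kl: "l + 1 < k \<or> k + 1 < l"
  shows "(\<Sum>w\<in>UNIV. E k y w * E 1 w x * E l w z) = 0"
proof -
  have D1: "1 \<le> D" using k l kl by auto
  define L where "L x y z = (\<Sum>w\<in>UNIV. E k y w * E 1 w x * E l w z)" for x y z
  have real: "cnj (L x y z) = L x y z" for x y z
    by (simp add: L_def E_real[OF k] E_real[OF l] E_real[OF D1] E_real[OF D1, unfolded One_nat_def])
  have "(\<Sum>x\<in>UNIV. \<Sum>y\<in>UNIV. \<Sum>z\<in>UNIV. L x y z * L x y z)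
     = (\<Sum>x\<in>UNIV. \<Sum>y\<in>UNIV. \<Sum>z\<in>UNIV. \<Sum>w\<in>UNIV. \<Sum>w'\<in>UNIV.
          (E k y w * E 1 w x * E l w z) * (E k y w' * E 1 w' x * E l w' z))"
    by (simp add: L_def sum_product)
  also have "\<dots> = (\<Sum>x\<in>UNIV. \<Sum>y\<in>UNIV. \<Sum>w\<in>UNIV. \<Sum>w'\<in>UNIV. \<Sum>z\<in>UNIV.
          (E k y w * E 1 w x * E l w z) * (E k y w' * E 1 w' x * E l w' z))"
    by (rule sum.cong[OF refl], rule sum.cong[OF refl], rule swap3)
  also have "\<dots> = (\<Sum>x\<in>UNIV. \<Sum>w\<in>UNIV. \<Sum>w'\<in>UNIV. \<Sum>y\<in>UNIV. \<Sum>z\<in>UNIV.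
          (E k y w * E 1 w x * E l w z) * (E k y w' * E 1 w' x * E l w' z))"
    by (rule sum.cong[OF refl], rule swap3)
  also have "\<dots> = (\<Sum>w\<in>UNIV. \<Sum>w'\<in>UNIV. \<Sum>x\<in>UNIV. \<Sum>y\<in>UNIV. \<Sum>z\<in>UNIV.
          (E k y w * E 1 w x * E l w z) * (E k y w' * E 1 w' x * E l w' z))"
    by (rule swap3)
  also have "\<dots> = (\<Sum>w\<in>UNIV. \<Sum>w'\<in>UNIV. \<Sum>x\<in>UNIV. \<Sum>y\<in>UNIV. \<Sum>z\<in>UNIV.
          (E 1 w x * E 1 w' x) * (E k y w * E k y w') * (E l w z * E l w' z))"
    by (intro sum.cong refl) (simp add: mult_ac)
  also have "\<dots> = (\<Sum>w\<in>UNIV. \<Sum>w'\<in>UNIV. (\<Sum>x\<in>UNIV. E 1 w x * E 1 w' x) *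
          (\<Sum>y\<in>UNIV. E k y w * E k y w') * (\<Sum>z\<in>UNIV. E l w z * E l w' z))"
    by (rule sum.cong[OF refl], rule sum.cong[OF refl], rule prod3)
  also have "\<dots> = (\<Sum>w\<in>UNIV. \<Sum>w'\<in>UNIV. E 1 w w' * E k w w' * E l w w')"
  proof (rule sum.cong[OF refl], rule sum.cong[OF refl])
    fix w w'
    have "(\<Sum>x\<in>UNIV. E 1 w x * E 1 w' x) = E 1 w w'"
      using Esq[OF D1, of w w'] by (metis (no_types, lifting) E_sym[OF D1] sum.cong)
    moreover have "(\<Sum>z\<in>UNIV. E l w z * E l w' z) = E l w w'"
      using Esq[OF l, of w w'] by (metis (no_types, lifting) E_sym[OF l] sum.cong)
    ultimately show "(\<Sum>x\<in>UNIV. E 1 w x * E 1 w' x) * (\<Sum>y\<in>UNIV. E k y w * E k y w') *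
          (\<Sum>z\<in>UNIV. E l w z * E l w' z) = E 1 w w' * E k w w' * E l w w'"
      using Esq[OF k] by simp
  qed
  also have "\<dots> = 0" using krein_sum[OF k l kl] by (simp add: mult_ac)
  finally have S0: "(\<Sum>x\<in>UNIV. \<Sum>y\<in>UNIV. \<Sum>z\<in>UNIV. L x y z * L x y z) = 0" .
  have Lre: "L x y z = of_real (Re (L x y z))" for x y z
    using real[of x y z] by (auto simp: complex_eq_iff)
  have eqR: "(\<Sum>x\<in>UNIV. \<Sum>y\<in>UNIV. \<Sum>z\<in>UNIV. L x y z * L x y z)
      = of_real (\<Sum>x\<in>UNIV. \<Sum>y\<in>UNIV. \<Sum>z\<in>UNIV. (Re (L x y z))\<^sup>2)"
  proof -
    have sq: "L x y z * L x y z = of_real ((Re (L x y z))\<^sup>2)" for x y z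
    proof -
      have "L x y z * L x y z = of_real (Re (L x y z)) * of_real (Re (L x y z))"
        using Lre[of x y z] by simp
      also have "\<dots> = of_real ((Re (L x y z))\<^sup>2)" by (simp add: power2_eq_square)
      finally show ?thesis .
    qed
    show ?thesis by (simp only: sq of_real_sum)
  qed
  have "complex_of_real (\<Sum>x\<in>UNIV. \<Sum>y\<in>UNIV. \<Sum>z\<in>UNIV. (Re (L x y z))\<^sup>2) = 0"
    by (simp only: eqR[symmetric] S0)
  then have "(\<Sum>x\<in>UNIV. \<Sum>y\<in>UNIV. \<Sum>z\<in>UNIV. (Re (L x y z))\<^sup>2) = 0"
    by (simp only: of_real_eq_0_iff)
  then have "Re (L x y z) = 0" by (rule sum3_zero)
  then have "L x y z = 0" using Lre[of x y z] by simp
  then show ?thesis by (simp add: L_def)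
qed

lemma krein_vec:
  assumes k: "k \<le> D" and l: "l \<le> D" and kl: "l + 1 < k \<or> k + 1 < l"
  shows "mvec (E k) (\<lambda>y. E 1 x y * mvec (E l) u y) = 0"
proof (rule ext)
  fix y
  have D1: "1 \<le> D" using k l kl by auto
  have "mvec (E k) (\<lambda>y. E 1 x y * mvec (E l) u y) y
      = (\<Sum>w\<in>UNIV. \<Sum>z\<in>UNIV. E k y w * E 1 w x * E l w z * u z)"
    unfolding mvec_def
  proof (simp only: sum_distrib_left, intro sum.cong refl)
    fix w z
    show "E k y w * (E 1 x w * (E l w z * u z)) = E k y w * E 1 w x * E l w z * u z"
      using E_sym[OF D1, of x w] by (simp add: mult_ac)
  qed
  also have "\<dots> = (\<Sum>z\<in>UNIV. (\<Sum>w\<in>UNIV. E k y w * E 1 w x * E l w z) * u z)"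
    by (simp add: sum_distrib_right) (rule sum.swap)
  also have "\<dots> = 0" using krein_mat[OF k l kl] by simp
  finally show "mvec (E k) (\<lambda>y. E 1 x y * mvec (E l) u y) y = 0 y" by simp
qed

end


definition vsc :: "complex \<Rightarrow> 'x vec \<Rightarrow> 'x vec" where "vsc c u = (\<lambda>y. c * u y)"

lemma vec_vs: "vector_space vsc"
  by unfold_locales (auto simp: vsc_def fun_eq_iff algebra_simps)

interpretation VV: vector_space "vsc :: complex \<Rightarrow> ('x::finite) vec \<Rightarrow> 'x vec"
  by (rule vec_vs)

lemma std_indep: "VV.independent (range (std_vec :: ('x::finite) \<Rightarrow> 'x vec))"
proof -
  have inj: "inj (std_vec :: 'x \<Rightarrow> 'x vec)"
    by (rule injI) (auto simp: std_vec_def fun_eq_iff split: if_splits)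
  have "\<not> (\<exists>v\<in>range std_vec. c v \<noteq> 0)"
    if h: "(\<Sum>v\<in>range (std_vec :: 'x \<Rightarrow> 'x vec). vsc (c v) v) = 0" for c
  proof -
    have h2: "(\<Sum>y\<in>UNIV. vsc (c (std_vec y)) (std_vec y :: 'x vec)) = 0"
      using h by (simp add: sum.reindex[OF inj])
    have "c (std_vec z) = 0" for z
    proof -
      have "(\<Sum>y\<in>UNIV. vsc (c (std_vec y)) (std_vec y :: 'x vec)) z = c (std_vec z)"
        by (simp add: sum_fun_app vsc_def std_vec_def)
      then show ?thesis using h2 by simp
    qed
    then show ?thesis by auto
  qed
  then show ?thesis by (subst VV.dependent_finite) auto
qed

lemma std_span: "VV.span (range (std_vec :: ('x::finite) \<Rightarrow> 'x vec)) = UNIV"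
proof -
  have "u \<in> VV.span (range std_vec)" for u :: "'x vec"
  proof -
    have "u = (\<Sum>y\<in>UNIV. vsc (u y) (std_vec y))"
      by (simp add: fun_eq_iff sum_fun_app vsc_def std_vec_def)
    also have "\<dots> \<in> VV.span (range std_vec)"
      by (intro VV.span_sum VV.span_scale VV.span_base) auto
    finally show ?thesis .
  qed
  then show ?thesis by auto
qed

interpretation VF: finite_dimensional_vector_space "vsc :: complex \<Rightarrow> ('x::finite) vec \<Rightarrow> 'x vec" "range std_vec"
  by unfold_locales (auto simp: std_indep std_span)

lemma csub_iff: "csubspace U \<longleftrightarrow> VV.subspace (U :: ('x::finite) vec set)"
  by (simp add: csubspace_def VV.subspace_def zero_vec_eq plus_fun_def vsc_def)

lemma csub_zero: "csubspace U \<Longrightarrow> 0 \<in> U"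
  by (simp add: csubspace_def zero_vec_eq)
lemma csub_add: "csubspace U \<Longrightarrow> u \<in> U \<Longrightarrow> w \<in> U \<Longrightarrow> u + w \<in> U"
  by (simp add: csubspace_def plus_fun_def)
lemma csub_vsc: "csubspace U \<Longrightarrow> u \<in> U \<Longrightarrow> vsc c u \<in> U"
  by (simp add: csubspace_def vsc_def)
lemma csub_neg: "csubspace U \<Longrightarrow> u \<in> U \<Longrightarrow> - u \<in> U"
proof -
  assume "csubspace U" "u \<in> U"
  then have "vsc (-1) u \<in> U" by (rule csub_vsc)
  moreover have "vsc (-1) u = - u" by (simp add: vsc_def fun_eq_iff)
  ultimately show ?thesis by simp
qed
lemma csub_diff: "csubspace U \<Longrightarrow> u \<in> U \<Longrightarrow> w \<in> U \<Longrightarrow> u - w \<in> U"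
  using csub_add[of U u "- w"] csub_neg[of U w] by simp
lemma csub_sum: "csubspace U \<Longrightarrow> (\<And>s. s \<in> S \<Longrightarrow> f s \<in> U) \<Longrightarrow> sum f S \<in> U"
proof (induction S rule: infinite_finite_induct)
  case (infinite A)
  have "sum f A = 0" using infinite.hyps by simp
  then show ?case using csub_zero[OF infinite.prems(1)] by (simp only:)
next
  case empty then show ?case using csub_zero[OF empty.prems(1)] by (simp only: sum.empty)
next
  case (insert a F)
  have e: "sum f (insert a F) = f a + sum f F" by (rule sum.insert[OF insert.hyps(1,2)])
  have "sum f F \<in> U" using insert.IH insert.prems by blast
  moreover have "f a \<in> U" using insert.prems by blast
  ultimately show ?case unfolding e by (rule csub_add[OF insert.prems(1), rotated])
qed

definition hip :: "('x::finite) vec \<Rightarrow> 'x vec \<Rightarrow> complex" where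
  "hip u w = (\<Sum>y\<in>UNIV. cnj (u y) * w y)"

definition orth :: "('x::finite) vec set \<Rightarrow> 'x vec set" where
  "orth U = {b. \<forall>u\<in>U. hip b u = 0}"

lemma hip_add_l: "hip (u + v) w = hip u w + hip v w"
  by (simp add: hip_def sum.distrib algebra_simps)
lemma hip_add_r: "hip u (v + w) = hip u v + hip u w"
  by (simp add: hip_def sum.distrib algebra_simps)
lemma hip_diff_l: "hip (u - v) w = hip u w - hip v w"
  by (simp add: hip_def sum_subtractf algebra_simps)
lemma hip_diff_r: "hip u (v - w) = hip u v - hip u w"
  by (simp add: hip_def sum_subtractf algebra_simps)
lemma hip_vsc_l: "hip (vsc c u) w = cnj c * hip u w"
  by (simp add: hip_def vsc_def sum_distrib_left algebra_simps)
lemma hip_vsc_r: "hip u (vsc c w) = c * hip u w"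
  by (simp add: hip_def vsc_def sum_distrib_left algebra_simps)
lemma hip_zero_l[simp]: "hip 0 w = 0" by (simp add: hip_def)
lemma hip_zero_r[simp]: "hip u 0 = 0" by (simp add: hip_def)
lemma hip_zero_l'[simp]: "hip (\<lambda>a. 0) w = 0" by (simp add: hip_def)
lemma hip_zero_r'[simp]: "hip u (\<lambda>a. 0) = 0" by (simp add: hip_def)
lemma hip_cnj: "cnj (hip u w) = hip w u"
  by (simp add: hip_def mult.commute)
lemma hip_self_real: "cnj (hip u u) = hip u u"
  using hip_cnj by blast
lemma hip_self_zero: "hip u u = 0 \<Longrightarrow> u = 0"
proof -
  assume h: "hip u u = 0"
  have "hip u u = of_real (\<Sum>y\<in>UNIV. (cmod (u y))\<^sup>2)"
    unfolding hip_def of_real_sum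
    by (intro sum.cong refl) (metis complex_norm_square mult.commute of_real_power)
  with h have "(\<Sum>y\<in>UNIV. (cmod (u y))\<^sup>2) = 0" by (simp only: of_real_eq_0_iff)
  then have "\<forall>y\<in>UNIV. (cmod (u y))\<^sup>2 = 0" by (subst (asm) sum_nonneg_eq_0_iff) auto
  then show "u = 0" by (simp add: fun_eq_iff)
qed

lemma orth_csub: "csubspace (orth U)"
  unfolding csubspace_def orth_def
  by (auto simp: zero_vec_eq hip_add_l[unfolded plus_fun_def] hip_vsc_l[unfolded vsc_def]
      simp del: hip_zero_l) (simp add: hip_def)

lemma orth_sym: "b \<in> orth U \<Longrightarrow> u \<in> U \<Longrightarrow> hip u b = 0"
proof -
  assume "b \<in> orth U" "u \<in> U"
  then have "hip b u = 0" unfolding orth_def by blast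
  then have "cnj (hip b u) = 0" by simp
  then show ?thesis by (simp only: hip_cnj)
qed

lemma orth_inter: "w \<in> U \<Longrightarrow> w \<in> orth U \<Longrightarrow> w = 0"
  unfolding orth_def using hip_self_zero by blast

lemma orth_anti: "W \<subseteq> U \<Longrightarrow> orth U \<subseteq> orth W"
  unfolding orth_def by auto

lemma proj_span: "finite B \<Longrightarrow> \<exists>a\<in>VV.span B. \<forall>w\<in>VV.span B. hip (u - a) w = 0"
proof (induction B arbitrary: u rule: finite_induct)
  case empty
  show ?case by (rule bexI[of _ 0]) auto
next
  case (insert b B)
  obtain ab where ab: "ab \<in> VV.span B" "\<forall>w\<in>VV.span B. hip (b - ab) w = 0"
    using insert.IH by blast
  obtain au where au: "au \<in> VV.span B" "\<forall>w\<in>VV.span B. hip (u - au) w = 0"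
    using insert.IH by blast
  define b' where "b' = b - ab"
  define c where "c = hip b' u / hip b' b'"
  define a where "a = au + vsc c b'"
  have b'o: "hip b' w = 0" if "w \<in> VV.span B" for w using ab that by (simp add: b'_def)
  have bins: "b \<in> VV.span (insert b B)" by (rule VV.span_base) simp
  have sub: "VV.span B \<subseteq> VV.span (insert b B)" by (rule VV.span_mono) auto
  have "b' \<in> VV.span (insert b B)" unfolding b'_def using bins sub ab(1) by (intro VV.span_diff) auto
  then have amem: "a \<in> VV.span (insert b B)" unfolding a_def using sub au(1)
    by (intro VV.span_add VV.span_scale) auto
  have o1: "hip (u - a) w0 = 0" if "w0 \<in> VV.span B" for w0
    using au(2) that b'o[OF that] by (simp add: a_def hip_diff_l hip_add_l hip_vsc_l)
  have o2: "hip (u - a) b' = 0"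
  proof (cases "hip b' b' = 0")
    case True
    then have "b' = 0" by (rule hip_self_zero)
    then show ?thesis by simp
  next
    case False
    have hau: "hip b' au = 0" using b'o au(1) by simp
    have "hip (u - a) b' = hip (u - au) b' - cnj c * hip b' b'"
      by (simp add: a_def hip_diff_l hip_add_l hip_vsc_l diff_diff_add)
    also have "hip (u - au) b' = cnj (hip b' u)"
      using hau by (metis hip_cnj hip_diff_r diff_zero)
    also have "cnj c * hip b' b' = cnj (hip b' u)"
      using False hip_self_real[of b'] by (simp add: c_def)
    finally have "hip (u - a) b' = cnj (hip b' u) - cnj (hip b' u)" .
    then show ?thesis by (simp only: diff_self)
  qed
  have "\<forall>w\<in>VV.span (insert b B). hip (u - a) w = 0"
  proof
    fix w assume "w \<in> VV.span (insert b B)"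
    then obtain k where k: "w - vsc k b \<in> VV.span B" using VV.span_insert by blast
    define w0 where "w0 = w - vsc k b"
    have w: "w = w0 + vsc k (b' + ab)" by (simp add: w0_def b'_def)
    have "hip (u - a) w = hip (u - a) w0 + k * (hip (u - a) b' + hip (u - a) ab)"
      by (simp add: w hip_add_r hip_vsc_r)
    also have "\<dots> = 0" using o1[of w0] o1[OF ab(1)] o2 k by (simp add: w0_def)
    finally show "hip (u - a) w = 0" .
  qed
  with amem show ?case by blast
qed

lemma csub_fin_span: "csubspace U \<Longrightarrow> \<exists>B. finite B \<and> VV.span B = U"
proof -
  assume U: "csubspace U"
  then have sU: "VV.subspace U" by (simp add: csub_iff)
  obtain B where B: "B \<subseteq> U" "VV.independent B" "U \<subseteq> VV.span B"
    by (rule VV.basis_exists[of U])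
  have "finite B" using B(2) by (rule VF.finiteI_independent)
  moreover have "VV.span B = U" using B(3) VV.span_minimal[OF B(1) sU] by blast
  ultimately show ?thesis by blast
qed

lemma proj_exists: "csubspace U \<Longrightarrow> \<exists>a\<in>U. u - a \<in> orth U"
  using csub_fin_span proj_span unfolding orth_def by fastforce

lemma dim_less: "csubspace U1 \<Longrightarrow> csubspace U \<Longrightarrow> U1 \<subseteq> U \<Longrightarrow> U1 \<noteq> U \<Longrightarrow> VV.dim U1 < VV.dim U"
proof -
  assume h: "csubspace U1" "csubspace U" "U1 \<subseteq> U" "U1 \<noteq> U"
  have "VV.subspace U1" "VV.subspace U" using h(1,2) csub_iff by blast+
  then have s1: "VV.span U1 = U1" and s2: "VV.span U = U" using VV.span_eq_iff by blast+
  have "VV.span U1 \<subset> VV.span U" unfolding s1 s2 using h(3,4) by blast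
  then show ?thesis by (rule VF.dim_psubset)
qed



lemma mvec_add: "mvec A (u + w) = mvec A u + mvec (A::('x::finite) mat) w"
  by (simp add: mvec_def fun_eq_iff algebra_simps sum.distrib)
lemma mvec_diff: "mvec A (u - w) = mvec A u - mvec (A::('x::finite) mat) w"
  by (simp add: mvec_def fun_eq_iff algebra_simps sum_subtractf)
lemma mvec_vsc: "mvec A (vsc c u) = vsc c (mvec (A::('x::finite) mat) u)"
  by (simp add: mvec_def fun_eq_iff vsc_def sum_distrib_left algebra_simps)
lemma mvec_zero: "mvec (A::('x::finite) mat) 0 = 0"
  by (simp add: mvec_def fun_eq_iff)
lemma mvec_sum: "mvec (A::('x::finite) mat) (sum f S) = (\<Sum>s\<in>S. mvec A (f s))"
proof (rule ext)
  fix y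
  have "(\<Sum>z\<in>UNIV. A y z * sum f S z) = (\<Sum>z\<in>UNIV. \<Sum>s\<in>S. A y z * f s z)"
    by (simp add: sum_fun_app sum_distrib_left)
  also have "\<dots> = (\<Sum>s\<in>S. \<Sum>z\<in>UNIV. A y z * f s z)" by (rule sum.swap)
  finally show "mvec A (sum f S) y = (\<Sum>s\<in>S. mvec A (f s)) y"
    by (simp add: mvec_def sum_fun_app)
qed
lemma mvec_madd: "mvec (\<lambda>y z. A y z + B y z) w = mvec A w + mvec (B::('x::finite) mat) w"
  by (simp add: mvec_def fun_eq_iff algebra_simps sum.distrib)
lemma mvec_msc': "mvec (\<lambda>y z. c * A y z) w = vsc c (mvec (A::('x::finite) mat) w)"
  by (simp add: mvec_def fun_eq_iff vsc_def sum_distrib_left algebra_simps)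

definition pm :: "('x::finite) vec \<Rightarrow> 'x vec \<Rightarrow> 'x vec" where "pm a u = (\<lambda>y. a y * u y)"

lemma pm_add: "pm a (u + w) = pm a u + pm a w" by (simp add: pm_def fun_eq_iff algebra_simps)
lemma pm_diff: "pm a (u - w) = pm a u - pm a w" by (simp add: pm_def fun_eq_iff algebra_simps)
lemma pm_vsc: "pm a (vsc c u) = vsc c (pm a u)" by (simp add: pm_def vsc_def fun_eq_iff algebra_simps)
lemma pm_zero: "pm a 0 = 0" by (simp add: pm_def fun_eq_iff)
lemma pm_sum: "pm a (sum f S) = (\<Sum>s\<in>S. pm a (f s))"
  by (simp add: pm_def fun_eq_iff sum_fun_app sum_distrib_left)

definition adj :: "('x::finite) mat \<Rightarrow> 'x mat" where "adj F = (\<lambda>y z. cnj (F z y))"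

lemma hip_mvec: "hip (mvec F b) u = hip b (mvec (adj F) u)"
proof -
  have "hip (mvec F b) u = (\<Sum>y\<in>UNIV. \<Sum>z\<in>UNIV. cnj (F y z) * cnj (b z) * u y)"
    by (simp add: hip_def mvec_def sum_distrib_right)
  also have "\<dots> = (\<Sum>z\<in>UNIV. \<Sum>y\<in>UNIV. cnj (F y z) * cnj (b z) * u y)" by (rule sum.swap)
  also have "\<dots> = hip b (mvec (adj F) u)"
    by (simp add: hip_def mvec_def adj_def sum_distrib_left mult_ac)
  finally show ?thesis .
qed


locale AX = AS D cls E for D and cls :: "'x::finite \<Rightarrow> 'x \<Rightarrow> nat" and E +
  fixes x :: 'x
  assumes D1: "1 \<le> D"
begin

abbreviation TT where "TT \<equiv> terw_alg D cls E x"

definition e1 :: "'x vec" where "e1 = (\<lambda>y. E 1 x y)"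

lemma BM_T: "B \<in> bose_mesner D cls \<Longrightarrow> B \<in> TT"
proof -
  assume "B \<in> bose_mesner D cls"
  then obtain c where c: "B = (\<lambda>y z. \<Sum>i\<le>D. c i * assoc_mat cls i y z)"
    by (auto simp: bose_mesner_def)
  have "n \<le> D \<Longrightarrow> (\<lambda>y z. \<Sum>i\<le>n. c i * assoc_mat cls i y z) \<in> TT" for n
  proof (induction n)
    case 0
    have "(\<lambda>y z. \<Sum>i\<le>0. c i * assoc_mat cls i y z) = (\<lambda>y z. c 0 * assoc_mat cls 0 y z)" by simp
    also have "\<dots> \<in> TT" by (intro terw_alg.smult terw_alg.gen_A) simp
    finally show ?case .
  next
    case (Suc n)
    have "(\<lambda>y z. \<Sum>i\<le>Suc n. c i * assoc_mat cls i y z)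
        = (\<lambda>y z. (\<lambda>y z. \<Sum>i\<le>n. c i * assoc_mat cls i y z) y z
                 + (\<lambda>y z. c (Suc n) * assoc_mat cls (Suc n) y z) y z)" by simp
    also have "\<dots> \<in> TT" using Suc
      by (intro terw_alg.add terw_alg.smult terw_alg.gen_A) auto
    finally show ?case .
  qed
  then show ?thesis using c by simp
qed

lemma E_T: "k \<le> D \<Longrightarrow> E k \<in> TT" using BM_T E_BM by blast

lemma mod_F: "is_module TT U \<Longrightarrow> F \<in> TT \<Longrightarrow> w \<in> U \<Longrightarrow> mvec F w \<in> U"
  by (simp add: is_module_def)
lemma mod_csub: "is_module TT U \<Longrightarrow> csubspace U"
  by (simp add: is_module_def)

lemma modI:
  assumes cs: "csubspace U"
    and A: "\<And>i w. i \<le> D \<Longrightarrow> w \<in> U \<Longrightarrow> mvec (assoc_mat cls i) w \<in> U"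
    and As: "\<And>i w. i \<le> D \<Longrightarrow> w \<in> U \<Longrightarrow> mvec (dual_adj E i x) w \<in> U"
  shows "is_module TT U"
proof -
  have "\<forall>w\<in>U. mvec F w \<in> U" if "F \<in> TT" for F
    using that
  proof (induction rule: terw_alg.induct)
    case (gen_A i) then show ?case using A by blast
  next
    case (gen_Astar i) then show ?case using As by blast
  next
    case (add A B)
    show ?case
    proof
      fix w assume "w \<in> U"
      then have "mvec A w + mvec B w \<in> U" using add.IH csub_add[OF cs] by blast
      then show "mvec (\<lambda>y z. A y z + B y z) w \<in> U" by (simp only: mvec_madd)
    qed
  next
    case (smult A c)
    show ?case
    proof
      fix w assume "w \<in> U"
      then have "vsc c (mvec A w) \<in> U" using smult.IH csub_vsc[OF cs] by blast
      then show "mvec (\<lambda>y z. c * A y z) w \<in> U" by (simp only: mvec_msc')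
    qed
  next
    case (mult A B) then show ?case by (simp add: mvec_mmult)
  qed
  then show ?thesis using cs by (simp add: is_module_def)
qed

lemma ifz_mult: "(if P then a else 0) * (b::complex) = (if P then a * b else 0)" by simp

lemma dadj_mvec: "mvec (dual_adj E i x) w = vsc (of_nat (card (UNIV :: 'x set))) (pm (\<lambda>y. E i x y) w)"
  by (simp add: mvec_def dual_adj_def vsc_def pm_def fun_eq_iff mult.assoc ifz_mult)

lemma mod_e1: "is_module TT U \<Longrightarrow> w \<in> U \<Longrightarrow> pm e1 w \<in> U"
proof -
  assume U: "is_module TT U" and w: "w \<in> U"
  have "mvec (dual_adj E 1 x) w \<in> U" using U w D1 by (intro mod_F terw_alg.gen_Astar)
  then have "vsc (1 / of_nat (card (UNIV :: 'x set))) (mvec (dual_adj E 1 x) w) \<in> U"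
    using mod_csub[OF U] csub_vsc by blast
  also have "vsc (1 / of_nat (card (UNIV :: 'x set))) (mvec (dual_adj E 1 x) w) = pm e1 w"
    by (simp add: dadj_mvec vsc_def pm_def e1_def fun_eq_iff)
  finally show ?thesis .
qed

lemma csub_poly:
  assumes cs: "csubspace U" and e: "\<And>w. w \<in> U \<Longrightarrow> pm e1 w \<in> U"
  shows "w \<in> U \<Longrightarrow> pm (\<lambda>y. poly q (E 1 x y)) w \<in> U"
proof (induction q arbitrary: w rule: pCons_induct)
  case 0
  have "pm (\<lambda>y. poly 0 (E 1 x y)) w = 0" by (simp add: pm_def fun_eq_iff)
  then show ?case using csub_zero[OF cs] by (simp only:)
next
  case (pCons a p)
  have "pm (\<lambda>y. poly (pCons a p) (E 1 x y)) w = vsc a w + pm e1 (pm (\<lambda>y. poly p (E 1 x y)) w)"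
    by (simp add: pm_def vsc_def e1_def fun_eq_iff algebra_simps)
  also have "\<dots> \<in> U" using pCons cs e by (intro csub_add csub_vsc) auto
  finally show ?case .
qed

lemma dadj_poly: "i \<le> D \<Longrightarrow> mvec (dual_adj E i x) w = vsc (of_nat (card (UNIV :: 'x set))) (pm (\<lambda>y. poly (pp i) (E 1 x y)) w)"
  by (simp add: dadj_mvec pp_E)

lemma modI2:
  assumes cs: "csubspace U"
    and A: "\<And>i w. i \<le> D \<Longrightarrow> w \<in> U \<Longrightarrow> mvec (assoc_mat cls i) w \<in> U"
    and e: "\<And>w. w \<in> U \<Longrightarrow> pm e1 w \<in> U"
  shows "is_module TT U"
proof (rule modI[OF cs A])
  fix i w assume i: "i \<le> D" and w: "w \<in> U"
  have "pm (\<lambda>y. poly (pp i) (E 1 x y)) w \<in> U" by (rule csub_poly[OF cs e w])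
  then have "vsc (of_nat (card (UNIV :: 'x set))) (pm (\<lambda>y. poly (pp i) (E 1 x y)) w) \<in> U"
    by (rule csub_vsc[OF cs])
  then show "mvec (dual_adj E i x) w \<in> U" by (simp only: dadj_poly[OF i])
qed

lemma adj_T: "F \<in> TT \<Longrightarrow> adj F \<in> TT"
proof (induction rule: terw_alg.induct)
  case (gen_A i)
  have "adj (assoc_mat cls i) = assoc_mat cls i"
    by (simp add: adj_def assoc_mat_def fun_eq_iff cls_sym)
  then show ?case using terw_alg.gen_A[OF gen_A] by simp
next
  case (gen_Astar i)
  have "adj (dual_adj E i x) = dual_adj E i x"
    using gen_Astar by (auto simp: adj_def dual_adj_def fun_eq_iff E_real)
  then show ?case using terw_alg.gen_Astar[OF gen_Astar] by simp
next
  case (add A B)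
  have "adj (\<lambda>y z. A y z + B y z) = (\<lambda>y z. adj A y z + adj B y z)" by (simp add: adj_def)
  then show ?case unfolding adj_def using terw_alg.add[OF add.IH, unfolded adj_def] by simp
next
  case (smult A c)
  have "adj (\<lambda>y z. c * A y z) = (\<lambda>y z. cnj c * adj A y z)" by (simp add: adj_def)
  then show ?case unfolding adj_def using terw_alg.smult[OF smult.IH, unfolded adj_def, of "cnj c"] by simp
next
  case (mult A B)
  have "adj (mmult A B) = mmult (adj B) (adj A)" by (simp add: adj_def mmult_def mult.commute)
  then show ?case using terw_alg.mult[OF mult.IH(2,1)] by simp
qed

lemma mod_orth: "is_module TT U \<Longrightarrow> is_module TT (orth U)"
proof -
  assume U: "is_module TT U"
  have "mvec F b \<in> orth U" if "F \<in> TT" "b \<in> orth U" for F b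
  proof -
    have "hip (mvec F b) u = 0" if "u \<in> U" for u
    proof -
      have "mvec (adj F) u \<in> U" using mod_F[OF U adj_T] \<open>F \<in> TT\<close> that by blast
      then show ?thesis using \<open>b \<in> orth U\<close> by (simp add: hip_mvec orth_def)
    qed
    then show ?thesis by (simp add: orth_def)
  qed
  then show ?thesis using orth_csub by (simp add: is_module_def)
qed

lemma mod_inter: "is_module TT U \<Longrightarrow> is_module TT V \<Longrightarrow> is_module TT (U \<inter> V)"
  by (simp add: is_module_def csubspace_def)

lemma decomp:
  "\<forall>U u. VV.dim U = n \<longrightarrow> is_module TT U \<longrightarrow> u \<in> U \<longrightarrow> u \<noteq> 0 \<longrightarrow>
     (\<exists>W v. irreducible_module TT W \<and> W \<subseteq> U \<and> v \<in> W \<and> v \<noteq> 0 \<and> u - v \<in> orth W)"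
proof (induction n rule: less_induct)
  case (less n)
  show ?case
  proof (intro allI impI)
    fix U u assume dU: "VV.dim U = n" and U: "is_module TT U" and u: "u \<in> U" and u0: "u \<noteq> 0"
    show "\<exists>W v. irreducible_module TT W \<and> W \<subseteq> U \<and> v \<in> W \<and> v \<noteq> 0 \<and> u - v \<in> orth W"
    proof (cases "irreducible_module TT U")
      case True
      have "u - u \<in> orth U" by (simp add: orth_def)
      then show ?thesis using True u u0 by blast
    next
      case False
      have "U \<noteq> {zero_vec}" using u u0 by (auto simp: zero_vec_eq)
      then obtain U1 where U1: "is_module TT U1" "U1 \<subseteq> U" "U1 \<noteq> {zero_vec}" "U1 \<noteq> U"
        using False U unfolding irreducible_module_def by blast
      obtain a where a: "a \<in> U1" "u - a \<in> orth U1" using proj_exists[OF mod_csub[OF U1(1)]] by blast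
      have dim1: "VV.dim U1 < n" using dim_less[OF mod_csub[OF U1(1)] mod_csub[OF U] U1(2,4)] dU by simp
      show ?thesis
      proof (cases "a = 0")
        case False
        then obtain W v where W: "irreducible_module TT W" "W \<subseteq> U1" "v \<in> W" "v \<noteq> 0" "a - v \<in> orth W"
          using less.IH[OF dim1] U1(1) a(1) by blast
        have "u - a \<in> orth W" using a(2) orth_anti[OF W(2)] by blast
        then have "(a - v) + (u - a) \<in> orth W" using W(5) orth_csub csub_add by blast
        then have "u - v \<in> orth W" by simp
        then show ?thesis using W U1(2) by blast
      next
        case True
        define U2 where "U2 = U \<inter> orth U1"
        have U2: "is_module TT U2" unfolding U2_def using mod_inter[OF U mod_orth[OF U1(1)]] .
        have uU2: "u \<in> U2" using u a True by (simp add: U2_def)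
        obtain w where w: "w \<in> U1" "w \<noteq> 0" using U1(3) mod_csub[OF U1(1)]
          by (auto simp: csubspace_def zero_vec_eq)
        have "w \<notin> U2" using orth_inter w by (auto simp: U2_def)
        then have "U2 \<noteq> U" using w U1(2) by blast
        then have dim2: "VV.dim U2 < n"
          using dim_less[OF mod_csub[OF U2] mod_csub[OF U]] dU by (auto simp: U2_def)
        then obtain W v where W: "irreducible_module TT W" "W \<subseteq> U2" "v \<in> W" "v \<noteq> 0" "u - v \<in> orth W"
          using less.IH[OF dim2] U2 uU2 u0 by blast
        then show ?thesis by (auto simp: U2_def)
      qed
    qed
  qed
qed

lemma transfer:
  assumes W: "is_module TT W" and v: "v \<in> W" and ch: "\<chi> - v \<in> orth W"
    and fadd: "\<And>a b. f (a + b) = f a + f b"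
    and fmod: "\<And>U w. is_module TT U \<Longrightarrow> w \<in> U \<Longrightarrow> f w \<in> U"
    and f0: "f \<chi> = 0"
  shows "f v = 0"
proof -
  have "f \<chi> = f v + f (\<chi> - v)" using fadd[of v "\<chi> - v"] by simp
  then have e: "f v = - f (\<chi> - v)" using f0 by (simp add: eq_neg_iff_add_eq_0)
  have "f (\<chi> - v) \<in> orth W" using fmod[OF mod_orth[OF W] ch] .
  then have "f v \<in> orth W" using e csub_neg[OF orth_csub] by simp
  moreover have "f v \<in> W" using fmod[OF W v] .
  ultimately show ?thesis using orth_inter by blast
qed

end


lemma mvec_msc: "mvec (msc c A) w = vsc c (mvec (A::('x::finite) mat) w)"
  unfolding msc_def by (rule mvec_msc')

context AX
begin

lemma E_decomp: "u = (\<Sum>k\<le>D. mvec (E k) u)"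
  by (simp add: fun_eq_iff sum_fun_app E_sum_vec)

lemma theta_distinct: "cls x y \<noteq> cls x z \<Longrightarrow> E 1 x y \<noteq> E 1 x z"
proof
  assume ne: "cls x y \<noteq> cls x z" and eq: "E 1 x y = E 1 x z"
  define i where "i = cls x y"
  have i: "i \<le> D" using cls_le by (simp add: i_def)
  obtain c where c: "assoc_mat cls i = (\<Sum>k\<le>D. msc (c k) (E k))" using BM_coef[OF assoc_BM[OF i]] by blast
  have Ek: "E k x y = E k x z" if "k \<le> D" for k
    using pp_E[OF that, of x y] pp_E[OF that, of x z] eq by simp
  have "assoc_mat cls i x y = (\<Sum>k\<le>D. c k * E k x y)"
    by (simp add: c sum_fun_app2 msc_def)
  also have "\<dots> = (\<Sum>k\<le>D. c k * E k x z)" using Ek by simp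
  also have "\<dots> = assoc_mat cls i x z" by (simp add: c sum_fun_app2 msc_def)
  finally show False using ne by (simp add: assoc_mat_def i_def)
qed

lemma krein_pm: "k \<le> D \<Longrightarrow> l \<le> D \<Longrightarrow> l + 1 < k \<or> k + 1 < l \<Longrightarrow> mvec (E k) (pm e1 (mvec (E l) u)) = 0"
  unfolding pm_def e1_def by (rule krein_vec)

lemma Ek_pm: "mvec (E k) (pm e1 u) = (\<Sum>l\<le>D. mvec (E k) (pm e1 (mvec (E l) u)))"
proof -
  have "pm e1 u = pm e1 (\<Sum>l\<le>D. mvec (E l) u)" using E_decomp[of u] by simp
  then show ?thesis by (simp add: pm_sum mvec_sum)
qed

lemma low_pm:
  assumes k: "k \<le> D" and low: "\<forall>l<p. mvec (E l) u = 0" and kp: "k + 1 < p"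
  shows "mvec (E k) (pm e1 u) = 0"
proof -
  have "mvec (E k) (pm e1 u) = (\<Sum>l\<le>D. mvec (E k) (pm e1 (mvec (E l) u)))" by (rule Ek_pm)
  also have "\<dots> = (\<Sum>l\<le>D. 0)"
  proof (rule sum.cong[OF refl])
    fix l assume l: "l \<in> {..D}"
    show "mvec (E k) (pm e1 (mvec (E l) u)) = 0"
    proof (cases "l < p")
      case True
      then show ?thesis using low by (simp add: pm_zero mvec_zero)
    next
      case False
      then show ?thesis using krein_pm[OF k, of l u] l kp by simp
    qed
  qed
  finally show ?thesis by simp
qed

lemma low_pm2:
  assumes p: "1 \<le> p" "p \<le> D" and low: "\<forall>l<p. mvec (E l) u = 0"
  shows "mvec (E (p - 1)) (pm e1 u) = mvec (E (p - 1)) (pm e1 (mvec (E p) u))"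
proof -
  have "mvec (E (p - 1)) (pm e1 u) = (\<Sum>l\<le>D. mvec (E (p - 1)) (pm e1 (mvec (E l) u)))" by (rule Ek_pm)
  also have "\<dots> = (\<Sum>l\<le>D. if l = p then mvec (E (p - 1)) (pm e1 (mvec (E p) u)) else 0)"
  proof (rule sum.cong[OF refl])
    fix l assume l: "l \<in> {..D}"
    show "mvec (E (p - 1)) (pm e1 (mvec (E l) u)) = (if l = p then mvec (E (p - 1)) (pm e1 (mvec (E p) u)) else 0)"
    proof (cases "l < p")
      case True
      then show ?thesis using low by (simp add: pm_zero mvec_zero)
    next
      case False
      show ?thesis
      proof (cases "l = p")
        case True then show ?thesis by simp
      next
        case False
        then have "(p - 1) + 1 < l" using \<open>\<not> l < p\<close> p by simp
        then show ?thesis using krein_pm[of "p - 1" l u] l p False by simp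
      qed
    qed
  qed
  also have "\<dots> = mvec (E (p - 1)) (pm e1 (mvec (E p) u))" using p by simp
  finally show ?thesis .
qed

lemma mvec_E_A:
  assumes k: "k \<le> D" and i: "i \<le> D"
  shows "\<exists>g. mvec (E k) (mvec (assoc_mat cls i) w) = vsc g (mvec (E k) w)"
proof -
  obtain g where g: "mmult (assoc_mat cls i) (E k) = msc g (E k)" "mmult (E k) (assoc_mat cls i) = msc g (E k)"
    using BM_mult_E[OF assoc_BM[OF i] k] by blast
  have "mvec (E k) (mvec (assoc_mat cls i) w) = mvec (mmult (E k) (assoc_mat cls i)) w"
    by (simp add: mvec_mmult)
  also have "\<dots> = vsc g (mvec (E k) w)" by (simp add: g mvec_msc)
  finally show ?thesis by blast
qed

lemma L_lower:
  assumes irr: "irreducible_module TT W" and thin: "dual_thin D E W"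
    and rp: "r < p" and pD: "p \<le> D" and Wr: "\<exists>w\<in>W. mvec (E r) w \<noteq> 0"
    and u: "u \<in> W" and low: "\<forall>k<p. mvec (E k) u = 0" and up: "mvec (E p) u \<noteq> 0"
  shows "mvec (E (p - 1)) (pm e1 (mvec (E p) u)) \<noteq> 0"
proof
  assume H: "mvec (E (p - 1)) (pm e1 (mvec (E p) u)) = 0"
  have W: "is_module TT W" using irr by (simp add: irreducible_module_def)
  obtain e where e: "\<forall>w\<in>W. \<exists>c. mvec (E p) w = (\<lambda>y. c * e y)"
    using thin pD by (auto simp: dual_thin_def)
  obtain c0 where c0: "mvec (E p) u = (\<lambda>y. c0 * e y)" using e u by blast
  have c0nz: "c0 \<noteq> 0" using c0 up by (auto simp: fun_eq_iff)
  have Z: "mvec (E (p - 1)) (pm e1 (mvec (E p) w)) = 0" if w: "w \<in> W" for w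
  proof -
    obtain c where c: "mvec (E p) w = (\<lambda>y. c * e y)" using e w by blast
    have "mvec (E p) w = vsc (c / c0) (mvec (E p) u)"
      using c0nz by (simp add: c c0 vsc_def fun_eq_iff)
    then have "mvec (E (p - 1)) (pm e1 (mvec (E p) w)) = vsc (c / c0) (mvec (E (p - 1)) (pm e1 (mvec (E p) u)))"
      by (simp add: pm_vsc mvec_vsc)
    also have "\<dots> = 0" using H by (simp add: vsc_def fun_eq_iff)
    finally show ?thesis .
  qed
  define W' where "W' = {w \<in> W. \<forall>k<p. mvec (E k) w = 0}"
  have csW: "csubspace W" using W by (rule mod_csub)
  have csW': "csubspace W'"
    unfolding csubspace_def
  proof (intro conjI ballI allI)
    show "zero_vec \<in> W'" using csub_zero[OF csW] by (simp add: W'_def zero_vec_eq mvec_zero)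
  next
    fix a b assume "a \<in> W'" "b \<in> W'"
    then show "(\<lambda>y. a y + b y) \<in> W'"
      using csub_add[OF csW, of a b] mvec_add[of _ a b] by (auto simp: W'_def plus_fun_def)
  next
    fix c a assume "a \<in> W'"
    then show "(\<lambda>y. c * a y) \<in> W'"
      using csub_vsc[OF csW, of a c] mvec_vsc[of _ c a] by (auto simp: W'_def vsc_def)
  qed
  have modW': "is_module TT W'"
  proof (rule modI2[OF csW'])
    fix i w assume i: "i \<le> D" and w: "w \<in> W'"
    have "mvec (assoc_mat cls i) w \<in> W" using mod_F[OF W terw_alg.gen_A[OF i]] w by (simp add: W'_def)
    moreover have "mvec (E k) (mvec (assoc_mat cls i) w) = 0" if kp: "k < p" for k
    proof -
      have "k \<le> D" using kp pD by simp
      then obtain g where "mvec (E k) (mvec (assoc_mat cls i) w) = vsc g (mvec (E k) w)"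
        using mvec_E_A[of k i w] i by blast
      then show ?thesis using w kp by (simp add: W'_def vsc_def fun_eq_iff)
    qed
    ultimately show "mvec (assoc_mat cls i) w \<in> W'" by (simp add: W'_def)
  next
    fix w assume w: "w \<in> W'"
    have "pm e1 w \<in> W" using mod_e1[OF W] w by (simp add: W'_def)
    moreover have "mvec (E k) (pm e1 w) = 0" if "k < p" for k
    proof (cases "k + 1 < p")
      case True
      then show ?thesis using low_pm[of k p w] w pD by (simp add: W'_def)
    next
      case False
      then have kp: "k = p - 1" "1 \<le> p" using that by auto
      have "mvec (E (p - 1)) (pm e1 w) = mvec (E (p - 1)) (pm e1 (mvec (E p) w))"
        using low_pm2[OF kp(2) pD] w by (simp add: W'_def)
      also have "\<dots> = 0" using Z w by (simp add: W'_def)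
      finally show ?thesis using kp by simp
    qed
    ultimately show "pm e1 w \<in> W'" by (simp add: W'_def)
  qed
  have sub: "W' \<subseteq> W" by (auto simp: W'_def)
  have uW': "u \<in> W'" using u low by (simp add: W'_def)
  have unz: "u \<noteq> zero_vec" using up by (auto simp: zero_vec_eq mvec_zero)
  obtain wr where wr: "wr \<in> W" "mvec (E r) wr \<noteq> 0" using Wr by blast
  then have wr': "wr \<notin> W'" using rp by (auto simp: W'_def)
  have "W' = {zero_vec} \<or> W' = W" using irr modW' sub unfolding irreducible_module_def by blast
  then show False
  proof
    assume "W' = {zero_vec}" then show False using uW' unz by blast
  next
    assume "W' = W" then show False using wr(1) wr' by blast
  qed
qed

lemma key:
  assumes irr: "irreducible_module TT W" and thin: "dual_thin D E W"
    and Wr: "\<exists>w\<in>W. mvec (E r) w \<noteq> 0"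
  shows "\<forall>u p \<Theta>. u \<in> W \<longrightarrow> finite \<Theta> \<longrightarrow> card \<Theta> \<le> s \<longrightarrow> (\<forall>y. u y \<noteq> 0 \<longrightarrow> E 1 x y \<in> \<Theta>)
     \<longrightarrow> (\<forall>k<p. mvec (E k) u = 0) \<longrightarrow> mvec (E p) u \<noteq> 0 \<longrightarrow> p \<le> D \<longrightarrow> r + s \<le> p \<longrightarrow> False"
proof (induction s)
  case 0
  show ?case
  proof (intro allI impI)
    fix u p \<Theta> assume h: "finite \<Theta>" "card \<Theta> \<le> 0" "\<forall>y. u y \<noteq> 0 \<longrightarrow> E 1 x y \<in> \<Theta>" "mvec (E p) u \<noteq> 0"
    then have "\<Theta> = {}" by simp
    then have "u = 0" using h(3) by (auto simp: fun_eq_iff)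
    then show False using h(4) by (simp add: mvec_zero)
  qed
next
  case (Suc s)
  show ?case
  proof (intro allI impI)
    fix u p \<Theta> assume u: "u \<in> W" and fin: "finite \<Theta>" and cd: "card \<Theta> \<le> Suc s"
      and supp: "\<forall>y. u y \<noteq> 0 \<longrightarrow> E 1 x y \<in> \<Theta>" and low: "\<forall>k<p. mvec (E k) u = 0"
      and up: "mvec (E p) u \<noteq> 0" and pD: "p \<le> D" and rs: "r + Suc s \<le> p"
    have W: "is_module TT W" using irr by (simp add: irreducible_module_def)
    show False
    proof (cases "\<Theta> = {}")
      case True
      then have "u = 0" using supp by (auto simp: fun_eq_iff)
      then show False using up by (simp add: mvec_zero)
    next
      case False
      then obtain \<theta> where th: "\<theta> \<in> \<Theta>" by blast
      define u' where "u' = pm e1 u - vsc \<theta> u"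
      have u'W: "u' \<in> W" unfolding u'_def
        using mod_e1[OF W u] csub_vsc[OF mod_csub[OF W] u] csub_diff[OF mod_csub[OF W]] by blast
      have supp': "\<forall>y. u' y \<noteq> 0 \<longrightarrow> E 1 x y \<in> \<Theta> - {\<theta>}"
        using supp by (auto simp: u'_def pm_def vsc_def e1_def algebra_simps)
      have cd': "card (\<Theta> - {\<theta>}) \<le> s" using cd th fin by simp
      have p1: "1 \<le> p" "r < p" using rs by auto
      have low': "\<forall>k<p - 1. mvec (E k) u' = 0"
      proof (intro allI impI)
        fix k assume "k < p - 1"
        then have kp: "k + 1 < p" "k \<le> D" using pD by auto
        have "mvec (E k) u' = mvec (E k) (pm e1 u) - vsc \<theta> (mvec (E k) u)"
          by (simp add: u'_def mvec_diff mvec_vsc)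
        also have "\<dots> = 0" using low_pm[OF kp(2) low kp(1)] low kp by (simp add: vsc_def fun_eq_iff)
        finally show "mvec (E k) u' = 0" .
      qed
      have "mvec (E (p - 1)) u' = mvec (E (p - 1)) (pm e1 u) - vsc \<theta> (mvec (E (p - 1)) u)"
        by (simp add: u'_def mvec_diff mvec_vsc)
      also have "\<dots> = mvec (E (p - 1)) (pm e1 (mvec (E p) u))"
        using low_pm2[OF p1(1) pD low] low p1 by (simp add: vsc_def fun_eq_iff)
      finally have up': "mvec (E (p - 1)) u' \<noteq> 0"
        using L_lower[OF irr thin p1(2) pD Wr u low up] by simp
      have rs': "r + s \<le> p - 1" using rs by simp
      have pD': "p - 1 \<le> D" using pD by simp
      have fin': "finite (\<Theta> - {\<theta>})" using fin by simp
      show False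
        using Suc.IH[rule_format, OF u'W fin' cd' supp'[rule_format] low'[rule_format] up' pD' rs'] .
    qed
  qed
qed

end


lemma sum_if_const: "(\<Sum>z\<in>(UNIV::('x::finite) set). if P z then c else 0) = of_nat (card {z. P z}) * (c::complex)"
proof -
  have "(\<Sum>z\<in>(UNIV::'x set). if P z then c else 0) = (\<Sum>z\<in>{z \<in> UNIV. P z}. c)"
    by (rule sum.inter_filter[symmetric]) simp
  then show ?thesis by simp
qed

context AX
begin

definition Pm :: "'x vec set" where "Pm = {u. \<forall>y z. cls x y = cls x z \<longrightarrow> u y = u z}"

definition fP :: "'x vec \<Rightarrow> nat \<Rightarrow> complex" where "fP u l = u (SOME z. cls x z = l)"

lemma rep: "cls x (SOME z. cls x z = cls x y) = cls x y"
  by (rule someI_ex) blast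

lemma Pm_val: "u \<in> Pm \<Longrightarrow> u y = fP u (cls x y)"
proof -
  assume "u \<in> Pm"
  then have h: "\<forall>y z. cls x y = cls x z \<longrightarrow> u y = u z" unfolding Pm_def by blast
  have "u (SOME z. cls x z = cls x y) = u y" using h[rule_format, OF rep[of y]] .
  then show ?thesis unfolding fP_def by (rule sym)
qed

lemma Pm_csub: "csubspace Pm"
  unfolding csubspace_def
proof (intro conjI ballI allI)
  show "zero_vec \<in> Pm" by (simp add: Pm_def zero_vec_def)
next
  fix a b assume a: "a \<in> Pm" and b: "b \<in> Pm"
  show "(\<lambda>y. a y + b y) \<in> Pm" unfolding Pm_def
  proof (intro CollectI allI impI)
    fix y z assume "cls x y = cls x z"
    then have "a y = a z" "b y = b z" using a b unfolding Pm_def by blast+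
    then show "a y + b y = a z + b z" by simp
  qed
next
  fix c a assume a: "a \<in> Pm"
  show "(\<lambda>y. c * a y) \<in> Pm" unfolding Pm_def
  proof (intro CollectI allI impI)
    fix y z assume "cls x y = cls x z"
    then have "a y = a z" using a unfolding Pm_def by blast
    then show "c * a y = c * a z" by simp
  qed
qed

lemma didem_mvec: "mvec (dual_idem cls i x) w = (\<lambda>y. if cls x y = i then w y else 0)"
  by (simp add: mvec_def dual_idem_def assoc_mat_def fun_eq_iff ifz_mult)

lemma Pm_A_val:
  assumes u: "u \<in> Pm"
  shows "mvec (assoc_mat cls i) u y = (\<Sum>l\<le>D. of_nat (card {z. cls y z = i \<and> cls z x = l}) * fP u l)"
proof -
  have fz: "u z = (\<Sum>l\<le>D. if cls z x = l then fP u l else 0)" for z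
    using Pm_val[OF u, of z] cls_le[of z x] cls_sym[of x z] by simp
  have "mvec (assoc_mat cls i) u y = (\<Sum>z\<in>UNIV. (if cls y z = i then 1 else 0) * u z)"
    by (simp add: mvec_def assoc_mat_def)
  also have "\<dots> = (\<Sum>z\<in>UNIV. \<Sum>l\<le>D. if cls y z = i \<and> cls z x = l then fP u l else 0)"
    by (rule sum.cong[OF refl]) (simp add: fz sum_distrib_left)
  also have "\<dots> = (\<Sum>l\<le>D. \<Sum>z\<in>UNIV. if cls y z = i \<and> cls z x = l then fP u l else 0)"
    by (rule sum.swap)
  also have "\<dots> = (\<Sum>l\<le>D. of_nat (card {z. cls y z = i \<and> cls z x = l}) * fP u l)"
    by (rule sum.cong[OF refl]) (rule sum_if_const)
  finally show ?thesis .
qed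

lemma Pm_A: "u \<in> Pm \<Longrightarrow> mvec (assoc_mat cls i) u \<in> Pm"
proof -
  assume u: "u \<in> Pm"
  have eqv: "mvec (assoc_mat cls i) u y = mvec (assoc_mat cls i) u y'" if yy: "cls x y = cls x y'" for y y'
  proof -
    have "card {z. cls y z = i \<and> cls z x = l} = card {z. cls y' z = i \<and> cls z x = l}" for l
    proof -
      obtain p where p: "\<forall>a b. cls a b = cls y x \<longrightarrow> card {w. cls a w = i \<and> cls w b = l} = p"
        using cls_int[of "cls y x" i l] by blast
      have c1: "cls y' x = cls y x" using yy cls_sym[of x y] cls_sym[of x y'] by simp
      have "card {z. cls y z = i \<and> cls z x = l} = p" using p by blast
      moreover have "card {z. cls y' z = i \<and> cls z x = l} = p" using p c1 by blast
      ultimately show ?thesis by simp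
    qed
    then show ?thesis by (simp add: Pm_A_val[OF u])
  qed
  show ?thesis unfolding Pm_def by (intro CollectI allI impI) (rule eqv)
qed

lemma Pm_e1: "u \<in> Pm \<Longrightarrow> pm e1 u \<in> Pm"
proof -
  assume u: "u \<in> Pm"
  show ?thesis unfolding Pm_def
  proof (intro CollectI allI impI)
    fix y z assume yz: "cls x y = cls x z"
    have "E 1 x y = E 1 x z" using E_cls[OF D1 yz] .
    moreover have "u y = u z" using u yz unfolding Pm_def by blast
    ultimately show "pm e1 u y = pm e1 u z" by (simp add: pm_def e1_def)
  qed
qed

lemma Pm_mod: "is_module TT Pm"
  by (rule modI2[OF Pm_csub]) (auto simp: Pm_A Pm_e1)

lemma one_Pm: "(\<lambda>y. 1) \<in> Pm" unfolding Pm_def by blast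

lemma Pm_E:
  assumes u: "u \<in> Pm" and j: "j \<le> D"
  shows "\<exists>c. mvec (E j) u = vsc c (mvec (E j) (std_vec x))"
proof -
  have "\<forall>l. \<exists>g. l \<le> D \<longrightarrow> mmult (E j) (assoc_mat cls l) = msc g (E j)"
    using BM_mult_E[OF assoc_BM j] by metis
  then obtain G where G: "\<And>l. l \<le> D \<Longrightarrow> mmult (E j) (assoc_mat cls l) = msc (G l) (E j)"
    by metis
  have fz: "u z = (\<Sum>l\<le>D. fP u l * assoc_mat cls l z x)" for z
    using Pm_val[OF u, of z] cls_le[of z x] cls_sym[of x z] by (simp add: assoc_mat_def)
  have "mvec (E j) u y = (\<Sum>l\<le>D. fP u l * G l) * mvec (E j) (std_vec x) y" for y
  proof -
    have "mvec (E j) u y = (\<Sum>z\<in>UNIV. \<Sum>l\<le>D. fP u l * (E j y z * assoc_mat cls l z x))"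
      by (simp add: mvec_def fz sum_distrib_left mult_ac)
    also have "\<dots> = (\<Sum>l\<le>D. fP u l * mmult (E j) (assoc_mat cls l) y x)"
      by (subst sum.swap) (simp add: mmult_def sum_distrib_left)
    also have "\<dots> = (\<Sum>l\<le>D. fP u l * (G l * E j y x))"
      by (rule sum.cong[OF refl]) (simp add: G msc_def)
    also have "\<dots> = (\<Sum>l\<le>D. fP u l * G l) * E j y x"
      unfolding sum_distrib_right by (rule sum.cong[OF refl]) (simp add: mult.assoc)
    also have "E j y x = mvec (E j) (std_vec x) y"
      by (simp add: mvec_def std_vec_def)
    finally show ?thesis .
  qed
  then show ?thesis by (auto simp: vsc_def fun_eq_iff)
qed

definition Qd :: "nat \<Rightarrow> 'x vec set" where
  "Qd t = {u. \<forall>F\<in>TT. \<forall>j. 1 \<le> j \<and> j \<le> t \<longrightarrow> mvec (E j) (mvec F u) = 0}"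

lemma Qd_mod: "is_module TT (Qd t)"
proof -
  have cs: "csubspace (Qd t)"
    unfolding csubspace_def
  proof (intro conjI ballI allI)
    show "zero_vec \<in> Qd t" by (simp add: Qd_def zero_vec_eq mvec_zero)
  next
    fix a b assume a: "a \<in> Qd t" and b: "b \<in> Qd t"
    have e: "(\<lambda>y. a y + b y) = a + b" by (simp add: fun_eq_iff)
    have "a + b \<in> Qd t" unfolding Qd_def
    proof (intro CollectI ballI allI impI)
      fix F j assume "F \<in> TT" "1 \<le> j \<and> j \<le> t"
      then have "mvec (E j) (mvec F a) = 0" "mvec (E j) (mvec F b) = 0" using a b unfolding Qd_def by blast+
      then show "mvec (E j) (mvec F (a + b)) = 0" by (simp only: mvec_add) simp
    qed
    then show "(\<lambda>y. a y + b y) \<in> Qd t" by (simp only: e)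
  next
    fix c a assume a: "a \<in> Qd t"
    have e: "(\<lambda>y. c * a y) = vsc c a" by (simp add: vsc_def)
    have "vsc c a \<in> Qd t" unfolding Qd_def
    proof (intro CollectI ballI allI impI)
      fix F j assume "F \<in> TT" "1 \<le> j \<and> j \<le> t"
      then have "mvec (E j) (mvec F a) = 0" using a unfolding Qd_def by blast
      then show "mvec (E j) (mvec F (vsc c a)) = 0" by (simp only: mvec_vsc) (simp add: vsc_def fun_eq_iff)
    qed
    then show "(\<lambda>y. c * a y) \<in> Qd t" by (simp only: e)
  qed
  have "mvec F' u \<in> Qd t" if "F' \<in> TT" "u \<in> Qd t" for F' u
    unfolding Qd_def
  proof (intro CollectI ballI allI impI)
    fix F j assume F: "F \<in> TT" and j: "1 \<le> j \<and> j \<le> t"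
    have "mmult F F' \<in> TT" using F that(1) by (rule terw_alg.mult)
    then have "mvec (E j) (mvec (mmult F F') u) = 0" using that(2) j unfolding Qd_def by blast
    then show "mvec (E j) (mvec F (mvec F' u)) = 0" by (simp only: mvec_mmult)
  qed
  then show ?thesis using cs by (simp add: is_module_def)
qed

definition Zs :: "nat \<Rightarrow> 'x vec set" where
  "Zs t = {a + b | a b. a \<in> Pm \<and> b \<in> Qd t}"

lemma Zs_mod: "is_module TT (Zs t)"
proof -
  have csP: "csubspace Pm" by (rule Pm_csub)
  have csQ: "csubspace (Qd t)" using Qd_mod by (rule mod_csub)
  have cs: "csubspace (Zs t)"
    unfolding csubspace_def
  proof (intro conjI ballI allI)
    have "(0::'x vec) + 0 \<in> Zs t" unfolding Zs_def using csub_zero[OF csP] csub_zero[OF csQ] by blast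
    then show "zero_vec \<in> Zs t" by (simp add: zero_vec_eq)
  next
    fix a b assume "a \<in> Zs t" "b \<in> Zs t"
    then obtain a1 a2 b1 b2 where "a = a1 + a2" "b = b1 + b2" "a1 \<in> Pm" "a2 \<in> Qd t" "b1 \<in> Pm" "b2 \<in> Qd t"
      unfolding Zs_def by blast
    then have "(a1 + b1) + (a2 + b2) \<in> Zs t" unfolding Zs_def using csub_add[OF csP] csub_add[OF csQ] by blast
    moreover have "(\<lambda>y. a y + b y) = (a1 + b1) + (a2 + b2)" using \<open>a = _\<close> \<open>b = _\<close> by (simp add: fun_eq_iff)
    ultimately show "(\<lambda>y. a y + b y) \<in> Zs t" by simp
  next
    fix c a assume "a \<in> Zs t"
    then obtain a1 a2 where "a = a1 + a2" "a1 \<in> Pm" "a2 \<in> Qd t" unfolding Zs_def by blast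
    then have "vsc c a1 + vsc c a2 \<in> Zs t" unfolding Zs_def using csub_vsc[OF csP] csub_vsc[OF csQ] by blast
    moreover have "(\<lambda>y. c * a y) = vsc c a1 + vsc c a2" using \<open>a = _\<close> by (simp add: fun_eq_iff vsc_def algebra_simps)
    ultimately show "(\<lambda>y. c * a y) \<in> Zs t" by simp
  qed
  have "mvec F u \<in> Zs t" if F: "F \<in> TT" and u: "u \<in> Zs t" for F u
  proof -
    obtain a b where ab: "u = a + b" "a \<in> Pm" "b \<in> Qd t" using u unfolding Zs_def by blast
    have "mvec F u = mvec F a + mvec F b" by (simp add: ab mvec_add)
    moreover have "mvec F a \<in> Pm" using mod_F[OF Pm_mod F ab(2)] .
    moreover have "mvec F b \<in> Qd t" using mod_F[OF Qd_mod F ab(3)] .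
    ultimately show ?thesis unfolding Zs_def by blast
  qed
  then show ?thesis using cs by (simp add: is_module_def)
qed

lemma Pm_Zs: "a \<in> Pm \<Longrightarrow> a \<in> Zs t"
proof -
  assume "a \<in> Pm"
  moreover have "(0::'x vec) \<in> Qd t" using csub_zero[OF mod_csub[OF Qd_mod]] .
  ultimately have "a + 0 \<in> Zs t" unfolding Zs_def by blast
  then show ?thesis by simp
qed

lemma Qd_Zs: "b \<in> Qd t \<Longrightarrow> b \<in> Zs t"
proof -
  assume "b \<in> Qd t"
  moreover have "(0::'x vec) \<in> Pm" using csub_zero[OF Pm_csub] .
  ultimately have "0 + b \<in> Zs t" unfolding Zs_def by blast
  then show ?thesis by simp
qed

end


context AX
begin

lemma main_Z:
  fixes \<chi> :: "'x vec" and t :: nat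
  assumes t1: "1 \<le> t" and tD: "t \<le> D"
    and H7: "\<forall>W. irreducible_module TT W \<and> 1 \<le> dual_endpoint D E W
              \<and> dual_endpoint D E W \<le> t \<longrightarrow>
            int (card {i \<in> module_support D cls x W. mvec (dual_idem cls i x) \<chi> \<noteq> zero_vec})
              \<le> int (dual_degree D E \<chi>) - int (dual_endpoint D E W)"
    and H8: "\<forall>W. irreducible_module TT W \<and> dual_endpoint D E W \<le> t \<longrightarrow> dual_thin D E W"
  shows "\<chi> \<in> Zs t"
proof (rule ccontr)
  assume nZ: "\<chi> \<notin> Zs t"
  obtain a where a: "a \<in> Zs t" "\<chi> - a \<in> orth (Zs t)" using proj_exists[OF mod_csub[OF Zs_mod]] by blast
  define b where "b = \<chi> - a"
  have b0: "b \<noteq> 0" using nZ a(1) by (auto simp: b_def)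
  have Rmod: "is_module TT (orth (Zs t))" using mod_orth[OF Zs_mod] .
  obtain W v where Wv: "irreducible_module TT W" "W \<subseteq> orth (Zs t)" "v \<in> W" "v \<noteq> 0" "b - v \<in> orth W"
    using decomp[rule_format, OF refl Rmod _ b0] a(2) by (auto simp: b_def)
  have Wmod: "is_module TT W" using Wv(1) by (simp add: irreducible_module_def)
  have aW: "a \<in> orth W" unfolding orth_def using orth_sym a(1) Wv(2) by blast
  have chv: "\<chi> - v \<in> orth W"
  proof -
    have "a + (b - v) \<in> orth W" using csub_add[OF orth_csub aW Wv(5)] .
    then show ?thesis by (simp add: b_def)
  qed
  have E0W: "mvec (E 0) w = 0" if w: "w \<in> W" for w
  proof -
    have "(\<lambda>y. 1) \<in> Zs t" using Pm_Zs[OF one_Pm] .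
    then have "hip (\<lambda>y. 1) w = 0" using orth_sym Wv(2) w by blast
    then have s0: "(\<Sum>z\<in>UNIV. w z) = 0" by (simp add: hip_def)
    show ?thesis by (simp add: mvec_def E0 fun_eq_iff sum_divide_distrib[symmetric] s0)
  qed
  have "v \<notin> Qd t"
  proof
    assume "v \<in> Qd t"
    then have "v \<in> Zs t" by (rule Qd_Zs)
    moreover have "v \<in> orth (Zs t)" using Wv(2,3) by blast
    ultimately show False using orth_inter Wv(4) by blast
  qed
  then obtain F j where Fj: "F \<in> TT" "1 \<le> j" "j \<le> t" "mvec (E j) (mvec F v) \<noteq> 0"
    unfolding Qd_def by blast
  define r where "r = dual_endpoint D E W"
  have ex: "\<exists>j. j \<le> D \<and> (\<exists>w\<in>W. mvec (E j) w \<noteq> zero_vec)"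
    using Fj tD mod_F[OF Wmod Fj(1) Wv(3)] by (auto simp: zero_vec_eq)
  have rprop: "r \<le> D \<and> (\<exists>w\<in>W. mvec (E r) w \<noteq> zero_vec)"
    unfolding r_def dual_endpoint_def using LeastI_ex[OF ex] .
  have rj: "r \<le> j"
    unfolding r_def dual_endpoint_def
    using Fj tD mod_F[OF Wmod Fj(1) Wv(3)] by (intro Least_le) (auto simp: zero_vec_eq)
  have Wr: "\<exists>w\<in>W. mvec (E r) w \<noteq> 0" using rprop by (simp add: zero_vec_eq)
  have r1: "1 \<le> r"
  proof (rule ccontr)
    assume "\<not> 1 \<le> r"
    then have "r = 0" by simp
    then show False using Wr E0W by auto
  qed
  have rt: "r \<le> t" using rj Fj(3) by simp
  have lowW: "mvec (E k) w = 0" if "k < r" "w \<in> W" for k w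
  proof -
    have "\<not> (k \<le> D \<and> (\<exists>w\<in>W. mvec (E k) w \<noteq> zero_vec))"
      using not_less_Least[of k "\<lambda>j. j \<le> D \<and> (\<exists>w\<in>W. mvec (E j) w \<noteq> zero_vec)"] that(1)
      unfolding r_def dual_endpoint_def by blast
    moreover have "k \<le> D" using that(1) rprop by simp
    ultimately show ?thesis using that(2) by (auto simp: zero_vec_eq)
  qed
  have thin: "dual_thin D E W" using H8 Wv(1) rt by (simp add: r_def)
  define S where "S = {i \<in> module_support D cls x W. mvec (dual_idem cls i x) \<chi> \<noteq> zero_vec}"
  define \<delta> where "\<delta> = dual_degree D E \<chi>"
  have cardS: "int (card S) \<le> int \<delta> - int r"
    using H7 Wv(1) r1 rt by (simp add: S_def \<delta>_def r_def)
  have Ev: "mvec (E k) v = 0" if k: "1 \<le> k" "k < \<delta>" "k \<le> D" for k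
  proof -
    have "\<not> (k \<noteq> 0 \<and> k \<le> D \<and> mvec (E k) \<chi> \<noteq> zero_vec)"
      using not_less_Least[of k "\<lambda>j. j \<noteq> 0 \<and> j \<le> D \<and> mvec (E j) \<chi> \<noteq> zero_vec"] k(2)
      unfolding \<delta>_def dual_degree_def by blast
    then have Ech: "mvec (E k) \<chi> = 0" using k by (auto simp: zero_vec_eq)
    show ?thesis
    proof (rule transfer[OF Wmod Wv(3) chv])
      fix a b show "mvec (E k) (a + b) = mvec (E k) a + mvec (E k) b" by (rule mvec_add)
    next
      fix U w assume U: "is_module TT U" "w \<in> U"
      show "mvec (E k) w \<in> U" by (rule mod_F[OF U(1) E_T[OF k(3)] U(2)])
    next
      show "mvec (E k) \<chi> = 0" by (rule Ech)
    qed
  qed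
  define S0 where "S0 = {i. i \<le> D \<and> mvec (dual_idem cls i x) \<chi> \<noteq> zero_vec}"
  define \<theta> where "\<theta> i = E 1 x (SOME y. cls x y = i)" for i
  have th: "\<theta> (cls x y) = E 1 x y" for y
    unfolding \<theta>_def using E_cls[OF D1 rep[of y]] by simp
  define hq where "hq = (\<Prod>i\<in>S0. [:- \<theta> i, 1:])"
  have hq: "poly hq z = (\<Prod>i\<in>S0. z - \<theta> i)" for z by (simp add: hq_def poly_prod)
  have finS0: "finite S0" by (simp add: S0_def)
  have hchi: "pm (\<lambda>y. poly hq (E 1 x y)) \<chi> = 0"
  proof (rule ext)
    fix y
    show "pm (\<lambda>y. poly hq (E 1 x y)) \<chi> y = 0 y"
    proof (cases "\<chi> y = 0")
      case True then show ?thesis by (simp add: pm_def)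
    next
      case False
      have "mvec (dual_idem cls (cls x y) x) \<chi> y \<noteq> 0" using False by (simp add: didem_mvec)
      then have "cls x y \<in> S0" using cls_le by (auto simp: S0_def zero_vec_def)
      then have "(\<Prod>i\<in>S0. E 1 x y - \<theta> i) = 0"
        by (intro prod_zero[OF finS0] bexI[of _ "cls x y"]) (simp_all add: th)
      then have "poly hq (E 1 x y) = 0" by (simp only: hq)
      then show ?thesis by (simp add: pm_def)
    qed
  qed
  have hv: "pm (\<lambda>y. poly hq (E 1 x y)) v = 0"
  proof (rule transfer[OF Wmod Wv(3) chv])
    fix a b show "pm (\<lambda>y. poly hq (E 1 x y)) (a + b) = pm (\<lambda>y. poly hq (E 1 x y)) a + pm (\<lambda>y. poly hq (E 1 x y)) b"
      by (rule pm_add)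
  next
    fix U w assume U: "is_module TT U" "w \<in> U"
    show "pm (\<lambda>y. poly hq (E 1 x y)) w \<in> U"
      by (rule csub_poly[OF mod_csub[OF U(1)] mod_e1[OF U(1)] U(2)])
  next
    show "pm (\<lambda>y. poly hq (E 1 x y)) \<chi> = 0" by (rule hchi)
  qed
  have suppS: "cls x y \<in> S" if vy: "v y \<noteq> 0" for y
  proof -
    have "poly hq (E 1 x y) = 0" using hv vy by (auto simp: pm_def fun_eq_iff dest: fun_cong[of _ _ y])
    then obtain i where i: "i \<in> S0" "E 1 x y = \<theta> i" using finS0 by (auto simp: hq)
    then have "\<exists>y'. cls x y' = i"
      by (auto simp: S0_def didem_mvec zero_vec_def fun_eq_iff split: if_splits)
    then have ci: "cls x (SOME y'. cls x y' = i) = i" by (rule someI_ex)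
    have "cls x y = i"
    proof (rule ccontr)
      assume "cls x y \<noteq> i"
      then have "E 1 x y \<noteq> E 1 x (SOME y'. cls x y' = i)" using theta_distinct ci by metis
      then show False using i(2) by (simp add: \<theta>_def)
    qed
    then have "cls x y \<in> S0" using i by simp
    moreover have "cls x y \<in> module_support D cls x W"
    proof -
      have "mvec (dual_idem cls (cls x y) x) v y \<noteq> 0" using vy by (simp add: didem_mvec)
      then have "mvec (dual_idem cls (cls x y) x) v \<noteq> zero_vec" by (auto simp: zero_vec_def)
      then show ?thesis using Wv(3) cls_le unfolding module_support_def by blast
    qed
    ultimately show ?thesis by (simp add: S_def S0_def)
  qed
  define \<Theta> where "\<Theta> = \<theta> ` S"
  have finS: "finite S" by (rule finite_subset[of _ "{..D}"]) (auto simp: S_def module_support_def)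
  have fin\<Theta>: "finite \<Theta>" using finS by (simp add: \<Theta>_def)
  have card\<Theta>: "card \<Theta> \<le> card S" unfolding \<Theta>_def by (rule card_image_le[OF finS])
  have supp\<Theta>: "\<forall>y. v y \<noteq> 0 \<longrightarrow> E 1 x y \<in> \<Theta>"
    using suppS th unfolding \<Theta>_def by (metis image_eqI)
  have exm: "\<exists>k. k \<le> D \<and> mvec (E k) v \<noteq> 0"
  proof (rule ccontr)
    assume "\<not> ?thesis"
    then have "v = (\<Sum>k\<le>D. 0)" using E_decomp[of v] by (metis (no_types, lifting) atMost_iff sum.cong)
    then show False using Wv(4) by simp
  qed
  define m where "m = (LEAST k. k \<le> D \<and> mvec (E k) v \<noteq> 0)"
  have mprop: "m \<le> D \<and> mvec (E m) v \<noteq> 0" unfolding m_def by (rule LeastI_ex[OF exm])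
  have lowm: "\<forall>k<m. mvec (E k) v = 0"
  proof (intro allI impI)
    fix k assume "k < m"
    then have "\<not> (k \<le> D \<and> mvec (E k) v \<noteq> 0)" unfolding m_def by (rule not_less_Least)
    moreover have "k \<le> D" using \<open>k < m\<close> mprop by simp
    ultimately show "mvec (E k) v = 0" by simp
  qed
  have mr: "r \<le> m"
  proof (rule ccontr)
    assume "\<not> r \<le> m"
    then show False using lowW[of m v] Wv(3) mprop by simp
  qed
  have md: "\<delta> \<le> m"
  proof (rule ccontr)
    assume "\<not> \<delta> \<le> m"
    then have "m < \<delta>" by simp
    then show False using Ev[of m] mprop mr r1 by simp
  qed
  have bound: "r + card \<Theta> \<le> m" using cardS card\<Theta> md by linarith
  show False
    using key[OF Wv(1) thin Wr, of "card \<Theta>", rule_format, OF Wv(3) fin\<Theta> le_refl supp\<Theta>[rule_format]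
        lowm[rule_format] conjunct2[OF mprop] conjunct1[OF mprop] bound] .
qed

lemma main:
  fixes \<chi> :: "'x vec" and t :: nat
  assumes Z: "\<chi> \<in> Zs t" and tD: "t \<le> D"
  shows "\<forall>F\<in>TT. relative_design E (mvec F \<chi>) x t"
proof
  fix F assume F: "F \<in> TT"
  obtain p q where pq: "\<chi> = p + q" "p \<in> Pm" "q \<in> Qd t" using Z unfolding Zs_def by blast
  show "relative_design E (mvec F \<chi>) x t"
    unfolding relative_design_def
  proof (intro allI impI)
    fix j assume j: "1 \<le> j \<and> j \<le> t"
    then have jD: "j \<le> D" using tD by simp
    have Fp: "mvec F p \<in> Pm" using mod_F[OF Pm_mod F pq(2)] .
    have q0: "mvec (E j) (mvec F q) = 0" using pq(3) F j unfolding Qd_def by blast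
    obtain c where c: "mvec (E j) (mvec F p) = vsc c (mvec (E j) (std_vec x))"
      using Pm_E[OF Fp jD] by blast
    have "mvec (E j) (mvec F \<chi>) = mvec (E j) (mvec F p) + mvec (E j) (mvec F q)"
      by (simp only: pq(1) mvec_add)
    also have "\<dots> = vsc c (mvec (E j) (std_vec x))" using c q0 by simp
    finally have e: "mvec (E j) (mvec F \<chi>) = vsc c (mvec (E j) (std_vec x))" .
    show "\<exists>a b. (a \<noteq> 0 \<or> b \<noteq> 0) \<and>
           (\<lambda>y. a * mvec (E j) (mvec F \<chi>) y + b * mvec (E j) (std_vec x) y) = zero_vec"
      by (rule exI[of _ 1], rule exI[of _ "- c"]) (simp add: e vsc_def zero_vec_def fun_eq_iff)
  qed
qed

end

theorem corollary4p6:
  fixes D :: nat and cls :: "'x::finite \<Rightarrow> 'x \<Rightarrow> nat" and E :: "nat \<Rightarrow> 'x mat"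
    and x :: 'x and \<chi> :: "'x vec" and t :: nat
  assumes "sym_assoc_scheme D cls"
    and "primitive_idempotents D cls E"
    and "cometric D E"
    and "is_code cls E \<chi>"
    and "1 \<le> t" and "t \<le> D"
    and "\<forall>W. irreducible_module (terw_alg D cls E x) W \<and> 1 \<le> dual_endpoint D E W
              \<and> dual_endpoint D E W \<le> t \<longrightarrow>
            int (card {i \<in> module_support D cls x W. mvec (dual_idem cls i x) \<chi> \<noteq> zero_vec})
              \<le> int (dual_degree D E \<chi>) - int (dual_endpoint D E W)"
    and "\<forall>W. irreducible_module (terw_alg D cls E x) W \<and> dual_endpoint D E W \<le> t
              \<longrightarrow> dual_thin D E W"
  shows "\<forall>F\<in>terw_alg D cls E x. relative_design E (mvec F \<chi>) x t"
proof -
  interpret AX D cls E x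
    using assms(1,2,3,5,6) by unfold_locales auto
  show ?thesis using main_Z[OF assms(5,6,7,8)] main[OF _ assms(6)] by blast
qed


end
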